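(* Let $n\in\mathbb{Z}$. Let $t\in[0,1]\mapsto\gamma_t\in\mathcal{I}_n$ be a path and let $\tilde h:[0,1]^2\to\mathcal{I}_n$ be continuous with $\tilde h(0,t)=\gamma_t$ for all $t$. Assume that (i) the map $(t,s)\mapsto\gamma_t(s)$ is $C^1$ on $[0,1]\times S^1$; (ii) for all $t$, $\tilde h(1,t)$ is an embedding; (iii) for all $z$, $\tilde h(z,0)$ and $\tilde h(z,1)$ are embeddings. Then there exists a map $h:[0,1]^2\to\mathcal{I}_n$ such that: for all $t$, $h(0,t)=\gamma_t$; for every $z$, the map $h_z:(t,s)\mapsto h(z,t)(s)$ is $C^1$ on $[0,1]\times S^1$; the map $z\mapsto h_z$ is continuous from $[0,1]$ to the Banach space $C^1([0,1]\times S^1,\mathbb{R}^2)$; for all $t$, $h(1,t)$ is an embedding; and for all $z$, $h(z,0)$ and $h(z,1)$ are embeddings.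
   Context: $S^1=\mathbb{R}/\mathbb{Z}$ with base point $0$. $\mathcal{I}_n$ is the set of $C^1$ immersions $\gamma:S^1\to\mathbb{R}^2$ whose tangent vector has winding number $n$ and such that $\gamma'(0)$ is a positive multiple of $(1,0)$; it is topologized as a subset of the Banach space $C^1(S^1,\mathbb{R}^2)$ with norm $\max(\sup\|f\|,\sup\|f'\|)$. *)

theory Defs
  imports "HOL-Analysis.Analysis"
begin

text \<open>R^2 is modelled by the complex plane; (1,0) corresponds to 1.
  A map S^1 = R/Z \<rightarrow> R^2 is modelled as a 1-periodic map real \<Rightarrow> complex.\<close>

definition C1_loop :: "(real \<Rightarrow> complex) \<Rightarrow> bool" where
  "C1_loop \<gamma> \<longleftrightarrow> (\<forall>s. \<gamma> (s + 1) = \<gamma> s) \<and> (\<forall>s. \<gamma> differentiable (at s))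
     \<and> continuous_on UNIV (\<lambda>s. vector_derivative \<gamma> (at s))"

definition tangent_winding :: "(real \<Rightarrow> complex) \<Rightarrow> int \<Rightarrow> bool" where
  "tangent_winding \<gamma> n \<longleftrightarrow> (\<exists>\<theta>::real \<Rightarrow> real. continuous_on UNIV \<theta> \<and>
     (\<forall>s. vector_derivative \<gamma> (at s) = of_real (cmod (vector_derivative \<gamma> (at s))) * cis (2 * pi * \<theta> s))
     \<and> \<theta> 1 - \<theta> 0 = of_int n)"

definition Imm :: "int \<Rightarrow> (real \<Rightarrow> complex) set" where
  "Imm n = {\<gamma>. C1_loop \<gamma> \<and> (\<forall>s. vector_derivative \<gamma> (at s) \<noteq> 0) \<and> tangent_winding \<gamma> n
      \<and> (\<exists>c>0. vector_derivative \<gamma> (at 0) = of_real c)}"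

definition embedding_loop :: "(real \<Rightarrow> complex) \<Rightarrow> bool" where
  "embedding_loop \<gamma> \<longleftrightarrow> inj_on \<gamma> {0..<1}"

definition c1dist :: "(real \<Rightarrow> complex) \<Rightarrow> (real \<Rightarrow> complex) \<Rightarrow> real" where
  "c1dist f g = max (SUP s\<in>{0..1}. cmod (f s - g s))
     (SUP s\<in>{0..1}. cmod (vector_derivative f (at s) - vector_derivative g (at s)))"

definition C1_continuous_on :: "'a::metric_space set \<Rightarrow> ('a \<Rightarrow> real \<Rightarrow> complex) \<Rightarrow> bool" where
  "C1_continuous_on A H \<longleftrightarrow> (\<forall>x\<in>A. \<forall>e>0. \<exists>d>0. \<forall>y\<in>A. dist y x < d \<longrightarrow> c1dist (H y) (H x) < e)"

definition C1_with_derivs :: "(real \<times> real) set \<Rightarrow> (real \<times> real \<Rightarrow> complex)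
    \<Rightarrow> (real \<times> real \<Rightarrow> complex) \<Rightarrow> (real \<times> real \<Rightarrow> complex) \<Rightarrow> bool" where
  "C1_with_derivs S F Ft Fs \<longleftrightarrow>
     (\<forall>p\<in>S. (F has_derivative (\<lambda>(a, b). a *\<^sub>R Ft p + b *\<^sub>R Fs p)) (at p within S))
     \<and> continuous_on S Ft \<and> continuous_on S Fs"

definition C1_on :: "(real \<times> real) set \<Rightarrow> (real \<times> real \<Rightarrow> complex) \<Rightarrow> bool" where
  "C1_on S F \<longleftrightarrow> (\<exists>Ft Fs. C1_with_derivs S F Ft Fs)"

text \<open>Continuity of z \<mapsto> (F z, Ft z, Fs z) into C^1 of S with the sup norms.\<close>
definition C1_family_continuous :: "real set \<Rightarrow> (real \<times> real) set
   \<Rightarrow> (real \<Rightarrow> real \<times> real \<Rightarrow> complex) \<Rightarrow> (real \<Rightarrow> real \<times> real \<Rightarrow> complex)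
   \<Rightarrow> (real \<Rightarrow> real \<times> real \<Rightarrow> complex) \<Rightarrow> bool" where
  "C1_family_continuous Z S F Ft Fs \<longleftrightarrow>
     (\<forall>z\<in>Z. \<forall>e>0. \<exists>d>0. \<forall>z'\<in>Z. \<bar>z' - z\<bar> < d \<longrightarrow>
        (\<forall>p\<in>S. cmod (F z' p - F z p) \<le> e \<and> cmod (Ft z' p - Ft z p) \<le> e
                \<and> cmod (Fs z' p - Fs z p) \<le> e))"

end

theory Submission
  imports Defs
begin


abbreviation D :: "(real \<Rightarrow> complex) \<Rightarrow> real \<Rightarrow> complex" where
  "D f s \<equiv> vector_derivative f (at s)"

lemma per_nat: fixes f :: "real \<Rightarrow> 'a" assumes "\<forall>s. f (s+1) = f s" shows "f (s + real n) = f s"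
proof (induction n)
  case (Suc n) then show ?case using assms[rule_format, of "s + real n"] by (simp add: algebra_simps)
qed simp

lemma per_int: fixes f :: "real \<Rightarrow> 'a" assumes "\<forall>s. f (s+1) = f s" shows "f (s + of_int k) = f s"
proof (cases "k \<ge> 0")
  case True then obtain n where "k = int n" by (metis nonneg_eq_int)
  then show ?thesis using per_nat[OF assms] by simp
next
  case False then obtain n where "k = - int n" by (intro that[of "nat (-k)"]) simp
  then show ?thesis using per_nat[OF assms, of "s - real n" n] by simp
qed

lemma per_frac: fixes f :: "real \<Rightarrow> 'a" assumes "\<forall>s. f (s+1) = f s" shows "f s = f (s - of_int (floor s))"
  using per_int[OF assms, of "s - of_int (floor s)" "floor s"] by simp

lemma frac_in: "(s::real) - of_int (floor s) \<in> {0..1}"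
  using floor_correct[of s] real_of_int_floor_add_one_gt[of s] by (auto intro: less_imp_le simp: algebra_simps)

lemma C1_loop_per: "C1_loop f \<Longrightarrow> \<forall>s. f (s+1) = f s" by (simp add: C1_loop_def)

lemma C1_loop_hasD: "C1_loop f \<Longrightarrow> (f has_vector_derivative D f s) (at s)"
  by (simp add: C1_loop_def vector_derivative_works[symmetric])

lemma C1_loop_contD: "C1_loop f \<Longrightarrow> continuous_on UNIV (D f)"
  by (simp add: C1_loop_def)

lemma C1_loop_cont: "C1_loop f \<Longrightarrow> continuous_on UNIV f"
  unfolding C1_loop_def by (meson continuous_at_imp_continuous_on differentiable_imp_continuous_within)

lemma D_per: assumes "C1_loop f" shows "\<forall>s. D f (s+1) = D f s"
proof
  fix s
  have "((f \<circ> (\<lambda>x. x + 1)) has_vector_derivative (1 *\<^sub>R D f (s+1))) (at s)"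
    by (rule vector_diff_chain_at) (auto intro!: derivative_eq_intros C1_loop_hasD[OF assms])
  moreover have "f \<circ> (\<lambda>x. x + 1) = f" using C1_loop_per[OF assms] by auto
  ultimately show "D f (s+1) = D f s" by (simp add: vector_derivative_at)
qed


lemma bdd_cont01: fixes \<phi> :: "real \<Rightarrow> real" assumes "continuous_on UNIV \<phi>"
  shows "bdd_above (\<phi> ` {0..1})"
  by (meson assms bounded_imp_bdd_above compact_Icc compact_continuous_image compact_imp_bounded
        continuous_on_subset top_greatest)

lemma PW: assumes f: "C1_loop f" and g: "C1_loop g"
  shows "cmod (f s - g s) \<le> c1dist f g \<and> cmod (D f s - D g s) \<le> c1dist f g"
proof -
  define s' where "s' = s - of_int (floor s)"
  have s': "s' \<in> {0..1}" unfolding s'_def by (rule frac_in)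
  have e1: "f s = f s'" "g s = g s'" unfolding s'_def by (rule per_frac[OF C1_loop_per]; fact)+
  have e2: "D f s = D f s'" "D g s = D g s'" unfolding s'_def
    by (rule per_frac[where f="D _"]; rule D_per; fact)+
  have c1: "continuous_on UNIV (\<lambda>s. cmod (f s - g s))"
    using C1_loop_cont[OF f] C1_loop_cont[OF g] by (intro continuous_intros) auto
  have c2: "continuous_on UNIV (\<lambda>s. cmod (D f s - D g s))"
    using C1_loop_contD[OF f] C1_loop_contD[OF g] by (intro continuous_intros) auto
  have "cmod (f s' - g s') \<le> (SUP s\<in>{0..1}. cmod (f s - g s))"
    by (rule cSUP_upper[OF s' bdd_cont01[OF c1]])
  moreover have "cmod (D f s' - D g s') \<le> (SUP s\<in>{0..1}. cmod (D f s - D g s))"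
    by (rule cSUP_upper[OF s' bdd_cont01[OF c2]])
  ultimately show ?thesis unfolding c1dist_def e1 e2 by auto
qed

lemma J: fixes H :: "'a::metric_space \<Rightarrow> real \<Rightarrow> complex"
  assumes HC: "C1_continuous_on K H" and L: "\<forall>p\<in>K. C1_loop (H p)"
  shows "continuous_on (K \<times> UNIV) (\<lambda>(p,s). H p s)" "continuous_on (K \<times> UNIV) (\<lambda>(p,s). D (H p) s)"
proof -
  have gen: "continuous_on (K \<times> UNIV) (\<lambda>(p,s). G p s)"
    if GC: "\<And>p. p \<in> K \<Longrightarrow> continuous_on UNIV (G p)"
      and B: "\<And>p q s. p \<in> K \<Longrightarrow> q \<in> K \<Longrightarrow> cmod (G p s - G q s) \<le> c1dist (H p) (H q)"
    for G :: "'a \<Rightarrow> real \<Rightarrow> complex"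
    unfolding continuous_on_iff
  proof (intro ballI allI impI)
    fix x e assume x: "x \<in> K \<times> (UNIV::real set)" and e: "(0::real) < e"
    obtain p s where xe: "x = (p,s)" by force
    with x have p: "p \<in> K" by auto
    obtain d1 where d1: "d1 > 0" "\<forall>y\<in>K. dist y p < d1 \<longrightarrow> c1dist (H y) (H p) < e/2"
      using HC p e unfolding C1_continuous_on_def by (meson half_gt_zero)
    obtain d2 where d2: "d2 > 0" "\<forall>s'. dist s' s < d2 \<longrightarrow> dist (G p s') (G p s) < e/2"
      using GC[OF p] e unfolding continuous_on_iff by (meson UNIV_I half_gt_zero)
    show "\<exists>d>0. \<forall>x'\<in>K \<times> UNIV. dist x' x < d \<longrightarrow> dist ((\<lambda>(p,s). G p s) x') ((\<lambda>(p,s). G p s) x) < e"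
    proof (intro exI[of _ "min d1 d2"] conjI ballI impI)
      show "min d1 d2 > 0" using d1 d2 by simp
      fix x' assume x': "x' \<in> K \<times> UNIV" and dx: "dist x' x < min d1 d2"
      obtain p' s' where xe': "x' = (p',s')" by force
      with x' have p': "p' \<in> K" by auto
      have "dist p' p < d1" using dx dist_fst_le[of x' x] unfolding xe xe' by simp
      then have a: "cmod (G p' s' - G p s') < e/2" using B[OF p' p, of s'] d1 p' by fastforce
      have "dist s' s < d2" using dx dist_snd_le[of x' x] unfolding xe xe' by simp
      then have b: "cmod (G p s' - G p s) < e/2" using d2 by (simp add: dist_norm)
      have "cmod (G p' s' - G p s) \<le> cmod (G p' s' - G p s') + cmod (G p s' - G p s)"
        by (rule norm_diff_triangle_le[of _ "G p s'"]) auto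
      then show "dist ((\<lambda>(p,s). G p s) x') ((\<lambda>(p,s). G p s) x) < e"
        using a b unfolding xe xe' by (simp add: dist_norm)
    qed
  qed
  show "continuous_on (K \<times> UNIV) (\<lambda>(p,s). H p s)"
    by (rule gen) (use L PW C1_loop_cont in auto)
  show "continuous_on (K \<times> UNIV) (\<lambda>(p,s). D (H p) s)"
    by (rule gen) (use L PW C1_loop_contD in auto)
qed


lemma min_Df: assumes f: "C1_loop f" and nz: "\<forall>s. D f s \<noteq> 0"
  shows "\<exists>m>0. \<forall>s. m \<le> cmod (D f s)"
proof -
  have c: "continuous_on {0..1} (\<lambda>s. cmod (D f s))"
    using C1_loop_contD[OF f] by (intro continuous_intros) (auto intro: continuous_on_subset)
  obtain s0 where s0: "s0 \<in> {0..1}" "\<forall>y\<in>{0..1}. cmod (D f s0) \<le> cmod (D f y)"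
    using continuous_attains_inf[OF compact_Icc _ c] by auto
  show ?thesis
  proof (intro exI[of _ "cmod (D f s0)"] conjI allI)
    show "0 < cmod (D f s0)" using nz by simp
    fix s
    have "D f s = D f (s - of_int (floor s))" by (rule per_frac[where f="D f"], rule D_per[OF f])
    then show "cmod (D f s0) \<le> cmod (D f s)" using s0(2) frac_in[of s] by simp
  qed
qed

lemma polar_c: "z = of_real (cmod z) * cis (Arg z)"
  by (cases "z = 0") (simp_all add: cis_Arg complex_sgn_def scaleR_conv_of_real)

lemma imm_open: assumes fI: "f \<in> Imm n"
  shows "\<exists>\<delta>>0. \<forall>g. C1_loop g \<and> (\<exists>c>0. D g 0 = of_real c) \<and> (\<forall>s. cmod (D g s - D f s) \<le> \<delta>) \<longrightarrow> g \<in> Imm n"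
proof -
  have f: "C1_loop f" and nz: "\<forall>s. D f s \<noteq> 0" and tw: "tangent_winding f n"
    using fI by (auto simp: Imm_def)
  obtain m where m: "m > 0" "\<forall>s. m \<le> cmod (D f s)" using min_Df[OF f nz] by blast
  obtain \<theta> where th: "continuous_on UNIV \<theta>"
     "\<forall>s. D f s = of_real (cmod (D f s)) * cis (2 * pi * \<theta> s)" "\<theta> 1 - \<theta> 0 = of_int n"
    using tw unfolding tangent_winding_def by blast
  show ?thesis
  proof (intro exI[of _ "m/2"] conjI allI impI)
    show "m/2 > 0" using m by simp
    fix g assume "C1_loop g \<and> (\<exists>c>0. D g 0 = of_real c) \<and> (\<forall>s. cmod (D g s - D f s) \<le> m / 2)"
    then have g: "C1_loop g" and g0: "\<exists>c>0. D g 0 = of_real c" and cl: "\<And>s. cmod (D g s - D f s) \<le> m / 2"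
      by auto
    define q where "q s = D g s / D f s" for s
    have Dg: "D g s = q s * D f s" for s using nz by (simp add: q_def)
    have q1: "cmod (q s - 1) \<le> 1/2" for s
    proof -
      have "q s - 1 = (D g s - D f s) / D f s" using nz by (simp add: q_def field_simps)
      then have "cmod (q s - 1) = cmod (D g s - D f s) / cmod (D f s)" by (simp add: norm_divide)
      also have "\<dots> \<le> (m/2) / m"
        using cl[of s] m nz by (intro frac_le) auto
      finally show ?thesis using m by simp
    qed
    have qre: "Re (q s) > 0" for s
    proof -
      have "\<bar>Re (q s - 1)\<bar> \<le> 1/2" using q1[of s] abs_Re_le_cmod order_trans by blast
      then show ?thesis by (simp add: abs_if split: if_splits)
    qed
    have qnp: "q s \<notin> \<real>\<^sub>\<le>\<^sub>0" for s using qre[of s] by (auto simp: complex_nonpos_Reals_iff)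
    have qnz: "q s \<noteq> 0" for s using qre[of s] by auto
    have Dgnz: "D g s \<noteq> 0" for s using Dg[of s] qnz nz by simp
    define \<theta>g where "\<theta>g s = \<theta> s + Arg (q s) / (2 * pi)" for s
    have qc: "continuous_on UNIV q" unfolding q_def
      using C1_loop_contD[OF g] C1_loop_contD[OF f] nz by (intro continuous_intros) auto
    have c\<theta>g: "continuous_on UNIV \<theta>g" unfolding \<theta>g_def
      using th(1) qc qnp by (intro continuous_intros) auto
    have rep: "D g s = of_real (cmod (D g s)) * cis (2 * pi * \<theta>g s)" for s
    proof -
      have "D g s = (of_real (cmod (q s)) * cis (Arg (q s))) * (of_real (cmod (D f s)) * cis (2 * pi * \<theta> s))"
        using Dg[of s] polar_c[of "q s"] th(2) by metis
      also have "\<dots> = of_real (cmod (q s) * cmod (D f s)) * (cis (Arg (q s)) * cis (2 * pi * \<theta> s))"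
        by (simp add: algebra_simps)
      also have "\<dots> = of_real (cmod (D g s)) * cis (2 * pi * \<theta>g s)"
        by (simp add: Dg[of s] norm_mult cis_mult \<theta>g_def algebra_simps)
      finally show ?thesis .
    qed
    have "q 1 = q 0" unfolding q_def using D_per[OF g] D_per[OF f] by (metis add_0)
    then have "\<theta>g 1 - \<theta>g 0 = of_int n" using th(3) unfolding \<theta>g_def by simp
    then have "tangent_winding g n" unfolding tangent_winding_def using c\<theta>g rep by blast
    then show "g \<in> Imm n" unfolding Imm_def using g g0 Dgnz by blast
  qed
qed





lemma unif_Df: assumes f: "C1_loop f" and e: "e > 0"
  shows "\<exists>\<eta>>0. \<eta> \<le> 1/4 \<and> (\<forall>u v. \<bar>u - v\<bar> \<le> \<eta> \<longrightarrow> cmod (D f u - D f v) \<le> e)"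
proof -
  have "uniformly_continuous_on {-1..2} (D f)"
    by (rule compact_uniformly_continuous[OF continuous_on_subset[OF C1_loop_contD[OF f]]]) auto
  then obtain d where d: "d > 0" "\<And>x x'. x \<in> {-1..2} \<Longrightarrow> x' \<in> {-1..2} \<Longrightarrow> dist x' x < d \<Longrightarrow> dist (D f x') (D f x) < e"
    using uniformly_continuous_onE[OF _ e] by metis
  show ?thesis
  proof (intro exI[of _ "min (d/2) (1/4)"] conjI allI impI)
    show "min (d/2) (1/4) > 0" "min (d/2) (1/4) \<le> 1/4" using d by auto
    fix u v :: real assume uv: "\<bar>u - v\<bar> \<le> min (d/2) (1/4)"
    define k where "k = floor u"
    have P: "\<forall>s. D f (s+1) = D f s" by (rule D_per[OF f])
    have "D f u = D f (u - of_int k)" "D f v = D f (v - of_int k)"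
      using per_int[OF P, of "u - of_int k" k] per_int[OF P, of "v - of_int k" k] by simp_all
    moreover have "u - of_int k \<in> {-1..2}" "v - of_int k \<in> {-1..2}"
    proof -
      have fr: "0 \<le> u - of_int k" "u - of_int k \<le> 1" using frac_in[of u] unfolding k_def by auto
      have "\<bar>u - v\<bar> \<le> 1/4" using uv by simp
      then have "u - v \<le> 1/4" "v - u \<le> 1/4" by linarith+
      then show "u - of_int k \<in> {-1..2}" "v - of_int k \<in> {-1..2}" unfolding atLeastAtMost_iff
        using fr by linarith+
    qed
    moreover have "dist (u - of_int k) (v - of_int k) < d" using uv d by (simp add: dist_norm)
    ultimately have "dist (D f (u - of_int k)) (D f (v - of_int k)) < e" using d(2) by blast
    then show "cmod (D f u - D f v) \<le> e" using \<open>D f u = _\<close> \<open>D f v = _\<close> by (simp add: dist_norm)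
  qed
qed

lemma loc_est: assumes g: "C1_loop g" and ab: "a \<le> b"
  and B: "\<And>u. u \<in> {a..b} \<Longrightarrow> cmod (D g u - c) \<le> B"
  shows "cmod (g b - g a - (b - a) *\<^sub>R c) \<le> B * (b - a)"
proof -
  have "norm ((\<lambda>u. g u - u *\<^sub>R c) b - (\<lambda>u. g u - u *\<^sub>R c) a) \<le> B * norm (b - a)"
  proof (rule differentiable_bound[where f'="\<lambda>u h. h *\<^sub>R (D g u - c)"])
    show "convex {a..b}" by simp
    show "((\<lambda>u. g u - u *\<^sub>R c) has_derivative (\<lambda>h. h *\<^sub>R (D g u - c))) (at u within {a..b})" for u
      using C1_loop_hasD[OF g, of u]
      by (auto intro!: derivative_eq_intros simp: has_vector_derivative_def algebra_simps
          intro: has_derivative_at_withinI)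
    show "onorm (\<lambda>h. h *\<^sub>R (D g u - c)) \<le> B" if "u \<in> {a..b}" for u
    proof (rule onorm_le)
      fix h :: real
      have "cmod (D g u - c) * \<bar>h\<bar> \<le> B * \<bar>h\<bar>" by (rule mult_right_mono[OF B[OF that]]) simp
      then show "norm (h *\<^sub>R (D g u - c)) \<le> B * norm h" by (simp add: mult.commute)
    qed
  qed (use ab in auto)
  then show ?thesis using ab by (simp add: algebra_simps)
qed

lemma inj_mod1: assumes f: "C1_loop f" and emb: "embedding_loop f" and eq: "f x = f y"
  shows "x - y \<in> \<int>"
proof -
  have P: "\<forall>s. f (s+1) = f s" by (rule C1_loop_per[OF f])
  have fx: "x - of_int (floor x) \<in> {0..<1}" "y - of_int (floor y) \<in> {0..<1}"
    using frac_in real_of_int_floor_add_one_gt[of x] real_of_int_floor_add_one_gt[of y]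
    by (auto simp: algebra_simps)
  have "f (x - of_int (floor x)) = f (y - of_int (floor y))"
    using eq per_frac[OF P, of x] per_frac[OF P, of y] by simp
  then have "x - of_int (floor x) = y - of_int (floor y)"
    using emb fx unfolding embedding_loop_def by (meson inj_onD)
  then have "x - y = of_int (floor x - floor y)" by simp
  then show ?thesis by (metis Ints_of_int)
qed

lemma emb_open: assumes f: "C1_loop f" and nz: "\<forall>s. D f s \<noteq> 0" and emb: "embedding_loop f"
  shows "\<exists>\<delta>>0. \<forall>g. C1_loop g \<and> (\<forall>s. cmod (g s - f s) \<le> \<delta> \<and> cmod (D g s - D f s) \<le> \<delta>) \<longrightarrow> embedding_loop g"
proof -
  obtain m where m: "m > 0" "\<forall>s. m \<le> cmod (D f s)" using min_Df[OF f nz] by blast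
  obtain \<eta> where eta: "\<eta> > 0" "\<eta> \<le> 1/4" "\<forall>u v. \<bar>u - v\<bar> \<le> \<eta> \<longrightarrow> cmod (D f u - D f v) \<le> m/4"
    using unif_Df[OF f, of "m/4"] m by auto
  define K where "K = {0..1::real} \<times> {\<eta>..1-\<eta>}"
  have cK: "compact K" unfolding K_def by (intro compact_Times) auto
  have neK: "K \<noteq> {}" unfolding K_def using eta by auto
  have c1: "continuous_on UNIV (\<lambda>p::real\<times>real. f (fst p + snd p))"
    by (rule continuous_on_compose2[OF C1_loop_cont[OF f]]) (intro continuous_intros, simp)
  have c2: "continuous_on UNIV (\<lambda>p::real\<times>real. f (fst p))"
    by (rule continuous_on_compose2[OF C1_loop_cont[OF f]]) (intro continuous_intros, simp)
  have "continuous_on UNIV (\<lambda>p::real\<times>real. cmod (f (fst p + snd p) - f (fst p)))"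
    using c1 c2 by (intro continuous_intros)
  then have ccK: "continuous_on K (\<lambda>(s,r). cmod (f (s + r) - f s))"
    unfolding case_prod_unfold by (rule continuous_on_subset) auto
  obtain p0 where p0: "p0 \<in> K" "\<forall>y\<in>K. (\<lambda>(s,r). cmod (f (s + r) - f s)) p0 \<le> (\<lambda>(s,r). cmod (f (s + r) - f s)) y"
    using continuous_attains_inf[OF cK neK ccK] by blast
  obtain s0 r0 where sr0: "p0 = (s0, r0)" by force
  define \<mu> where "\<mu> = cmod (f (s0 + r0) - f s0)"
  have mu: "\<forall>s r. s \<in> {0..1} \<longrightarrow> r \<in> {\<eta>..1-\<eta>} \<longrightarrow> \<mu> \<le> cmod (f (s + r) - f s)"
    using p0(2) unfolding \<mu>_def sr0 K_def by auto
  have "\<mu> > 0"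
  proof -
    have r0: "0 < r0" "r0 < 1" using p0(1) eta unfolding sr0 K_def by auto
    have "f (s0 + r0) \<noteq> f s0"
    proof
      assume "f (s0 + r0) = f s0"
      then have "(s0 + r0) - s0 \<in> \<int>" by (rule inj_mod1[OF f emb])
      then obtain k where "r0 = of_int k" by (auto elim: Ints_cases)
      with r0 show False by auto
    qed
    then show ?thesis unfolding \<mu>_def by simp
  qed
  show ?thesis
  proof (intro exI[of _ "min (m/4) (\<mu>/4)"] conjI allI impI)
    show "min (m/4) (\<mu>/4) > 0" using m \<open>\<mu> > 0\<close> by simp
    fix g assume "C1_loop g \<and> (\<forall>s. cmod (g s - f s) \<le> min (m/4) (\<mu>/4) \<and> cmod (D g s - D f s) \<le> min (m/4) (\<mu>/4))"
    then have g: "C1_loop g" and cv: "\<And>s. cmod (g s - f s) \<le> \<mu>/4" and cd: "\<And>s. cmod (D g s - D f s) \<le> m/4"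
      by auto
    have loc: "g b \<noteq> g a" if ab: "a < b" "b - a \<le> \<eta>" for a b
    proof -
      have "cmod (g b - g a - (b - a) *\<^sub>R D f a) \<le> (m/2) * (b - a)"
      proof (rule loc_est[OF g])
        fix u assume u: "u \<in> {a..b}"
        have "cmod (D g u - D f a) \<le> cmod (D g u - D f u) + cmod (D f u - D f a)"
          by (rule norm_diff_triangle_le[of _ "D f u"]) auto
        also have "\<dots> \<le> m/4 + m/4" using cd[of u] eta(3) u ab by (intro add_mono) auto
        finally show "cmod (D g u - D f a) \<le> m/2" by simp
      qed (use ab in auto)
      moreover have "cmod ((b - a) *\<^sub>R D f a) \<ge> m * (b - a)"
        using m(2)[rule_format, of a] ab by (simp add: mult.commute mult_right_mono)
      moreover have "cmod ((b - a) *\<^sub>R D f a) \<le> cmod (g b - g a) + cmod (g b - g a - (b - a) *\<^sub>R D f a)"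
        using norm_triangle_ineq4[of "g b - g a" "g b - g a - (b - a) *\<^sub>R D f a"] by simp
      ultimately have "cmod (g b - g a) \<ge> m * (b - a) - (m/2) * (b - a)"
        by linarith
      moreover have "m * (b - a) - (m/2) * (b - a) > 0"
      proof -
        have "m * (b - a) - (m/2) * (b - a) = (m/2) * (b - a)" by (simp add: left_diff_distrib[symmetric])
        moreover have "(m/2) * (b - a) > 0" using m ab by simp
        ultimately show ?thesis by simp
      qed
      ultimately show ?thesis by auto
    qed
    have main: "g x \<noteq> g y" if xy: "x \<in> {0..<1}" "y \<in> {0..<1}" "x < y" for x y
    proof -
      consider "y - x \<le> \<eta>" | "y - x \<ge> 1 - \<eta>" | "y - x \<in> {\<eta>..1-\<eta>}" by (cases "y - x \<le> \<eta>"; cases "y - x \<ge> 1 - \<eta>") auto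
      then show ?thesis
      proof cases
        case 1 then show ?thesis using loc[of x y] xy by auto
      next
        case 2
        have "g (x + 1) \<noteq> g y" using loc[of y "x+1"] xy 2 by auto
        then show ?thesis using C1_loop_per[OF g] by simp
      next
        case 3
        have "\<mu> \<le> cmod (f (x + (y - x)) - f x)" using mu[rule_format, of x "y-x"] xy 3 by auto
        then have fm: "\<mu> \<le> cmod (f y - f x)" by simp
        have "f y - f x = (g y - g x) - (g y - f y) + (g x - f x)" by simp
        then have "cmod (f y - f x) \<le> cmod (g y - g x) + cmod (g y - f y) + cmod (g x - f x)"
          using norm_triangle_ineq[of "(g y - g x) - (g y - f y)" "g x - f x"]
            norm_triangle_ineq4[of "g y - g x" "g y - f y"] by simp
        then have "cmod (g y - g x) > 0" using cv[of x] cv[of y] fm \<open>\<mu> > 0\<close> by linarith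
        then show ?thesis by auto
      qed
    qed
    show "embedding_loop g" unfolding embedding_loop_def inj_on_def
    proof (intro ballI impI)
      fix x y assume xy: "x \<in> {0..<1}" "y \<in> {0..<1}" "g x = g y"
      show "x = y"
      proof (rule ccontr)
        assume "x \<noteq> y"
        then consider "x < y" | "y < x" by linarith
        then show False
        proof cases
          case 1 then show False using main[of x y] xy by auto
        next
          case 2 then show False using main[of y x] xy by auto
        qed
      qed
    qed
  qed
qed



definition near :: "real \<Rightarrow> (real \<Rightarrow> complex) \<Rightarrow> (real \<Rightarrow> complex) \<Rightarrow> bool" where
  "near \<delta> g f \<longleftrightarrow> (\<forall>s. cmod (g s - f s) \<le> \<delta> \<and> cmod (D g s - D f s) \<le> \<delta>)"

lemma unif: fixes F :: "'a::metric_space \<Rightarrow> real \<Rightarrow> complex"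
  assumes K: "compact K" and FC: "C1_continuous_on K F" and FL: "\<forall>p\<in>K. C1_loop (F p)"
    and loc: "\<forall>p\<in>K. \<exists>\<delta>>0. \<forall>g. C1_loop g \<and> Q g \<and> near \<delta> g (F p) \<longrightarrow> P g"
  shows "\<exists>\<delta>>0. \<forall>p\<in>K. \<forall>g. C1_loop g \<and> Q g \<and> near \<delta> g (F p) \<longrightarrow> P g"
proof (rule ccontr)
  assume "\<not> ?thesis"
  then have "\<forall>k::nat. \<exists>p g. p \<in> K \<and> C1_loop g \<and> Q g \<and> near (1 / Suc k) g (F p) \<and> \<not> P g"
    by (metis of_nat_0_less_iff zero_less_Suc zero_less_divide_1_iff)
  then obtain pp gg where pg: "\<And>k. pp k \<in> K \<and> C1_loop (gg k) \<and> Q (gg k) \<and> near (1 / Suc k) (gg k) (F (pp k)) \<and> \<not> P (gg k)"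
    by metis
  obtain l r where l: "l \<in> K" "strict_mono r" "(pp \<circ> r) \<longlonglongrightarrow> l"
    using compact_imp_seq_compact[OF K] pg unfolding seq_compact_def by metis
  obtain \<delta> where dl: "\<delta> > 0" "\<forall>g. C1_loop g \<and> Q g \<and> near \<delta> g (F l) \<longrightarrow> P g" using loc l(1) by blast
  obtain d where d: "d > 0" "\<forall>y\<in>K. dist y l < d \<longrightarrow> c1dist (F y) (F l) < \<delta>/2"
    using FC l(1) dl(1) unfolding C1_continuous_on_def by (meson half_gt_zero)
  obtain N where N: "\<forall>n\<ge>N. dist ((pp \<circ> r) n) l < d" using l(3) d(1) lim_sequentially by metis
  obtain M where M: "1 / real (Suc M) < \<delta>/2" using dl(1) by (meson half_gt_zero nat_approx_posE)
  define k where "k = r (max N M)"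
  have kM: "M \<le> k" unfolding k_def using seq_suble[OF l(2), of "max N M"] by simp
  have "1 / real (Suc k) \<le> 1 / real (Suc M)" using kM by (simp add: frac_le)
  with M have kd: "1 / real (Suc k) < \<delta>/2" by linarith
  have pd: "c1dist (F (pp k)) (F l) < \<delta>/2" using N d(2) pg unfolding k_def by simp
  have "near \<delta> (gg k) (F l)" unfolding near_def
  proof
    fix s
    have n1: "cmod (gg k s - F (pp k) s) \<le> 1 / Suc k" "cmod (D (gg k) s - D (F (pp k)) s) \<le> 1 / Suc k"
      using pg[of k] unfolding near_def by auto
    have n2: "cmod (F (pp k) s - F l s) < \<delta>/2" "cmod (D (F (pp k)) s - D (F l) s) < \<delta>/2"
      using PW[OF FL[rule_format, OF pg[THEN conjunct1]] FL[rule_format, OF l(1)], of k s] pd by auto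
    have "cmod (gg k s - F l s) \<le> cmod (gg k s - F (pp k) s) + cmod (F (pp k) s - F l s)"
      by (rule norm_diff_triangle_le[of _ "F (pp k) s"]) auto
    moreover have "cmod (D (gg k) s - D (F l) s) \<le> cmod (D (gg k) s - D (F (pp k)) s) + cmod (D (F (pp k)) s - D (F l) s)"
      by (rule norm_diff_triangle_le[of _ "D (F (pp k)) s"]) auto
    ultimately show "cmod (gg k s - F l s) \<le> \<delta> \<and> cmod (D (gg k) s - D (F l) s) \<le> \<delta>"
      using n1 n2 kd by linarith
  qed
  then have "P (gg k)" using dl(2) pg by blast
  then show False using pg by blast
qed



lemma hvd_scaleR_right: "(g has_vector_derivative g') F \<Longrightarrow> ((\<lambda>x. c *\<^sub>R g x) has_vector_derivative c *\<^sub>R g') F"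
  by (rule bounded_linear.has_vector_derivative[OF bounded_linear_scaleR_right])

lemma C1_sum: assumes fin: "finite A" and G: "\<forall>k\<in>A. C1_loop (G k)"
  shows "C1_loop (\<lambda>s. \<Sum>k\<in>A. c k *\<^sub>R G k s)"
    and "D (\<lambda>s. \<Sum>k\<in>A. c k *\<^sub>R G k s) s = (\<Sum>k\<in>A. c k *\<^sub>R D (G k) s)"
proof -
  have hd: "((\<lambda>s. \<Sum>k\<in>A. c k *\<^sub>R G k s) has_vector_derivative (\<Sum>k\<in>A. c k *\<^sub>R D (G k) s)) (at s)" for s
    using G by (intro has_vector_derivative_sum hvd_scaleR_right C1_loop_hasD) auto
  then show dd: "D (\<lambda>s. \<Sum>k\<in>A. c k *\<^sub>R G k s) s = (\<Sum>k\<in>A. c k *\<^sub>R D (G k) s)" for s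
    by (simp add: vector_derivative_at)
  show "C1_loop (\<lambda>s. \<Sum>k\<in>A. c k *\<^sub>R G k s)" unfolding C1_loop_def
  proof (intro conjI allI)
    show "(\<Sum>k\<in>A. c k *\<^sub>R G k (s + 1)) = (\<Sum>k\<in>A. c k *\<^sub>R G k s)" for s
      using G C1_loop_per by (intro sum.cong) auto
    show "(\<lambda>s. \<Sum>k\<in>A. c k *\<^sub>R G k s) differentiable at s" for s
      using hd[of s] differentiable_def has_vector_derivative_def by blast
    have "continuous_on UNIV (\<lambda>s. \<Sum>k\<in>A. c k *\<^sub>R D (G k) s)"
      using G C1_loop_contD by (intro continuous_intros) auto
    then show "continuous_on UNIV (\<lambda>s. D (\<lambda>s. \<Sum>k\<in>A. c k *\<^sub>R G k s) s)" by (simp add: dd)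
  qed
qed

lemma C1_lin: assumes f: "C1_loop f" and g: "C1_loop g"
  shows "C1_loop (\<lambda>s. a *\<^sub>R f s + b *\<^sub>R g s)"
    and "D (\<lambda>s. a *\<^sub>R f s + b *\<^sub>R g s) s = a *\<^sub>R D f s + b *\<^sub>R D g s"
proof -
  have hd: "((\<lambda>s. a *\<^sub>R f s + b *\<^sub>R g s) has_vector_derivative (a *\<^sub>R D f s + b *\<^sub>R D g s)) (at s)" for s
    using f g by (intro has_vector_derivative_add hvd_scaleR_right C1_loop_hasD) auto
  then show dd: "D (\<lambda>s. a *\<^sub>R f s + b *\<^sub>R g s) s = a *\<^sub>R D f s + b *\<^sub>R D g s" for s
    by (simp add: vector_derivative_at)
  show "C1_loop (\<lambda>s. a *\<^sub>R f s + b *\<^sub>R g s)" unfolding C1_loop_def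
  proof (intro conjI allI)
    show "a *\<^sub>R f (s + 1) + b *\<^sub>R g (s + 1) = a *\<^sub>R f s + b *\<^sub>R g s" for s
      using f g C1_loop_per by metis
    show "(\<lambda>s. a *\<^sub>R f s + b *\<^sub>R g s) differentiable at s" for s
      using hd[of s] differentiable_def has_vector_derivative_def by blast
    have "continuous_on UNIV (\<lambda>s. a *\<^sub>R D f s + b *\<^sub>R D g s)"
      using f g C1_loop_contD by (intro continuous_intros) auto
    then show "continuous_on UNIV (\<lambda>s. D (\<lambda>s. a *\<^sub>R f s + b *\<^sub>R g s) s)" by (simp add: dd)
  qed
qed

lemma bern_var: assumes n: "0 < n"
  shows "(\<Sum>k\<le>n. (x - k/n)\<^sup>2 * Bernstein n k x) = x * (1 - x) / n"
proof -
  have *: "\<And>a b x::real. (a - b)\<^sup>2 * x = a * (a - 1) * x + (1 - 2 * b) * a * x + b * b * x"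
    by (simp add: algebra_simps power2_eq_square)
  have "(\<Sum>k\<le>n. (k - n * x)\<^sup>2 * Bernstein n k x) = n * x * (1 - x)"
    apply (simp add: * sum.distrib)
    apply (simp flip: sum_distrib_left add: mult.assoc)
    apply (simp add: algebra_simps power2_eq_square)
    done
  then have "(\<Sum>k\<le>n. (k - n * x)\<^sup>2 * Bernstein n k x)/n^2 = x * (1 - x) / n"
    by (simp add: power2_eq_square)
  then show ?thesis
    using n by (simp add: sum_divide_distrib field_split_simps power2_commute)
qed

lemma bern_est: fixes \<phi> :: "nat \<Rightarrow> real"
  assumes n: "0 < n" and x: "0 \<le> x" "x \<le> 1" and d: "d > 0" and ep: "\<epsilon> \<ge> 0" and L: "L \<ge> 0"
    and pb: "\<And>k. k \<le> n \<Longrightarrow> \<phi> k \<le> L"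
    and pd: "\<And>k. k \<le> n \<Longrightarrow> \<bar>x - k/n\<bar> < d \<Longrightarrow> \<phi> k \<le> \<epsilon>"
  shows "(\<Sum>k\<le>n. Bernstein n k x * \<phi> k) \<le> \<epsilon> + L / (d\<^sup>2 * n)"
proof -
  have pk: "\<phi> k \<le> \<epsilon> + (L / d\<^sup>2) * (x - k/n)\<^sup>2" if k: "k \<le> n" for k
  proof (cases "\<bar>x - k/n\<bar> < d")
    case True then show ?thesis using pd[OF k] L d by (simp add: add_increasing2)
  next
    case False
    then have "d\<^sup>2 \<le> (x - k/n)\<^sup>2" using d by (metis abs_le_square_iff abs_of_pos not_less)
    then have "L \<le> (L / d\<^sup>2) * (x - k/n)\<^sup>2" using L d by (simp add: field_simps mult_left_mono)
    then show ?thesis using pb[OF k] ep by linarith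
  qed
  have "(\<Sum>k\<le>n. Bernstein n k x * \<phi> k) \<le> (\<Sum>k\<le>n. Bernstein n k x * (\<epsilon> + (L / d\<^sup>2) * (x - k/n)\<^sup>2))"
    using pk Bernstein_nonneg[OF x] by (intro sum_mono mult_left_mono) auto
  also have "\<dots> = \<epsilon> * (\<Sum>k\<le>n. Bernstein n k x) + (L / d\<^sup>2) * (\<Sum>k\<le>n. (x - k/n)\<^sup>2 * Bernstein n k x)"
    by (simp add: sum.distrib sum_distrib_left algebra_simps del: sum_Bernstein)
  also have "\<dots> = \<epsilon> + (L / d\<^sup>2) * (x * (1 - x) / n)" using bern_var[OF n] sum_Bernstein by simp
  also have "\<dots> \<le> \<epsilon> + (L / d\<^sup>2) * (1 / n)"
  proof -
    have "x * (1 - x) \<le> 1" using mult_left_mono[of "1-x" 1 x] x by simp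
    then have "x * (1 - x) / n \<le> 1 / n" using n by (simp add: divide_right_mono)
    then show ?thesis using L d by (intro add_left_mono mult_left_mono) auto
  qed
  finally show ?thesis by simp
qed


lemma per_reduce: assumes "C1_loop f" shows "f s = f (s - of_int (floor s))" "D f s = D f (s - of_int (floor s))"
  using per_frac[OF C1_loop_per[OF assms]] per_frac[where f="D f", OF D_per[OF assms]] by auto

lemma UC: fixes G :: "'a::metric_space \<Rightarrow> real \<Rightarrow> complex"
  assumes K: "compact K" and GC: "C1_continuous_on K G" and GL: "\<forall>p\<in>K. C1_loop (G p)"
  shows "\<exists>M. \<forall>p\<in>K. \<forall>s. cmod (G p s) \<le> M \<and> cmod (D (G p) s) \<le> M"
    and "\<forall>e>0. \<exists>d>0. \<forall>p\<in>K. \<forall>q\<in>K. dist p q < d \<longrightarrow> (\<forall>s. cmod (G p s - G q s) \<le> e \<and> cmod (D (G p) s - D (G q) s) \<le> e)"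
proof -
  have KC: "compact (K \<times> {0..1::real})" using K by (intro compact_Times) auto
  have c1: "continuous_on (K \<times> {0..1}) (\<lambda>(p,s). G p s)" and c2: "continuous_on (K \<times> {0..1}) (\<lambda>(p,s). D (G p) s)"
    using J[OF GC GL] by (auto intro: continuous_on_subset)
  obtain M1 where M1: "\<forall>x\<in>K \<times> {0..1}. norm ((\<lambda>(p,s). G p s) x) \<le> M1"
    using compact_imp_bounded[OF compact_continuous_image[OF c1 KC]] unfolding bounded_iff by auto
  obtain M2 where M2: "\<forall>x\<in>K \<times> {0..1}. norm ((\<lambda>(p,s). D (G p) s) x) \<le> M2"
    using compact_imp_bounded[OF compact_continuous_image[OF c2 KC]] unfolding bounded_iff by auto
  show "\<exists>M. \<forall>p\<in>K. \<forall>s. cmod (G p s) \<le> M \<and> cmod (D (G p) s) \<le> M"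
  proof (intro exI[of _ "max M1 M2"] ballI allI)
    fix p s assume p: "p \<in> K"
    have "(p, s - of_int (floor s)) \<in> K \<times> {0..1::real}" using p frac_in by auto
    then have "cmod (G p (s - of_int (floor s))) \<le> M1" "cmod (D (G p) (s - of_int (floor s))) \<le> M2"
      using M1 M2 by fastforce+
    then show "cmod (G p s) \<le> max M1 M2 \<and> cmod (D (G p) s) \<le> max M1 M2"
      using per_reduce[OF GL[rule_format, OF p], of s] by auto
  qed
  show "\<forall>e>0. \<exists>d>0. \<forall>p\<in>K. \<forall>q\<in>K. dist p q < d \<longrightarrow> (\<forall>s. cmod (G p s - G q s) \<le> e \<and> cmod (D (G p) s - D (G q) s) \<le> e)"
  proof (intro allI impI)
    fix e :: real assume e: "e > 0"
    obtain d1 where d1: "d1 > 0" "\<And>x x'. x \<in> K \<times> {0..1} \<Longrightarrow> x' \<in> K \<times> {0..1} \<Longrightarrow> dist x' x < d1 \<Longrightarrow> dist ((\<lambda>(p,s). G p s) x') ((\<lambda>(p,s). G p s) x) < e"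
      using uniformly_continuous_onE[OF compact_uniformly_continuous[OF c1 KC] e] by metis
    obtain d2 where d2: "d2 > 0" "\<And>x x'. x \<in> K \<times> {0..1} \<Longrightarrow> x' \<in> K \<times> {0..1} \<Longrightarrow> dist x' x < d2 \<Longrightarrow> dist ((\<lambda>(p,s). D (G p) s) x') ((\<lambda>(p,s). D (G p) s) x) < e"
      using uniformly_continuous_onE[OF compact_uniformly_continuous[OF c2 KC] e] by metis
    show "\<exists>d>0. \<forall>p\<in>K. \<forall>q\<in>K. dist p q < d \<longrightarrow> (\<forall>s. cmod (G p s - G q s) \<le> e \<and> cmod (D (G p) s - D (G q) s) \<le> e)"
    proof (rule exI[of _ "min d1 d2"], rule conjI)
      show "min d1 d2 > 0" using d1 d2 by simp
    next
      show "\<forall>p\<in>K. \<forall>q\<in>K. dist p q < min d1 d2 \<longrightarrow> (\<forall>s. cmod (G p s - G q s) \<le> e \<and> cmod (D (G p) s - D (G q) s) \<le> e)"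
      proof (intro ballI impI allI)
      fix p q and s :: real assume p: "p \<in> K" and q: "q \<in> K" and pq: "dist p q < min d1 d2"
      define s' where "s' = s - of_int (floor s)"
      have s': "s' \<in> {0..1}" unfolding s'_def by (rule frac_in)
      have dd: "dist (p, s') (q, s') = dist p q" by (simp add: dist_Pair_Pair)
      have "dist (G p s') (G q s') < e" using d1(2)[of "(q,s')" "(p,s')"] p q s' pq dd by auto
      moreover have "dist (D (G p) s') (D (G q) s') < e" using d2(2)[of "(q,s')" "(p,s')"] p q s' pq dd by auto
      ultimately show "cmod (G p s - G q s) \<le> e \<and> cmod (D (G p) s - D (G q) s) \<le> e"
        using per_reduce[OF GL[rule_format, OF p], of s] per_reduce[OF GL[rule_format, OF q], of s]
        unfolding s'_def by (simp add: dist_norm)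
    qed
    qed
  qed
qed


lemma bern_apply: fixes W :: "nat \<Rightarrow> complex"
  assumes N: "0 < N" and t: "0 \<le> t" "t \<le> 1" and d: "d > 0" and e: "e > 0" and M: "M \<ge> 0"
    and b1: "\<And>k. k \<le> N \<Longrightarrow> cmod (W k - w) \<le> 2 * M"
    and b2: "\<And>k. k \<le> N \<Longrightarrow> \<bar>t - k/N\<bar> < d \<Longrightarrow> cmod (W k - w) \<le> e/2"
    and NL: "4 * M / (d\<^sup>2 * e) < N"
  shows "cmod ((\<Sum>k\<le>N. Bernstein N k t *\<^sub>R W k) - w) \<le> e"
proof -
  have "(\<Sum>k\<le>N. Bernstein N k t *\<^sub>R W k) - w = (\<Sum>k\<le>N. Bernstein N k t *\<^sub>R (W k - w))"
  proof -
    have "(\<Sum>k\<le>N. Bernstein N k t *\<^sub>R w) = w" by (simp add: scaleR_sum_left[symmetric])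
    then show ?thesis by (simp add: scaleR_diff_right sum_subtractf)
  qed
  then have "cmod ((\<Sum>k\<le>N. Bernstein N k t *\<^sub>R W k) - w) \<le> (\<Sum>k\<le>N. Bernstein N k t * cmod (W k - w))"
    using Bernstein_nonneg[OF t] by (auto intro!: order_trans[OF norm_sum] sum_mono)
  also have "\<dots> \<le> e/2 + (2*M) / (d\<^sup>2 * N)"
    by (rule bern_est[OF N t d]) (use e M b1 b2 in auto)
  also have "(2*M) / (d\<^sup>2 * N) \<le> e/2"
  proof -
    have "4 * M < N * (d\<^sup>2 * e)" using NL d e by (simp add: field_simps)
    then show ?thesis using d N by (simp add: field_simps)
  qed
  finally show ?thesis by simp
qed

lemma APX: fixes H :: "real \<Rightarrow> real \<Rightarrow> real \<Rightarrow> complex"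
  assumes HC: "C1_continuous_on ({0..1}\<times>{0..1}) (\<lambda>(z,t). H z t)"
    and HL: "\<forall>z\<in>{0..1}. \<forall>t\<in>{0..1}. C1_loop (H z t)" and e: "e > 0"
  shows "\<exists>N>0. \<forall>z\<in>{0..1}. \<forall>t\<in>{0..1}. \<forall>s.
     cmod ((\<Sum>k\<le>N. Bernstein N k t *\<^sub>R H z (k/N) s) - H z t s) \<le> e \<and>
     cmod ((\<Sum>k\<le>N. Bernstein N k t *\<^sub>R D (H z (k/N)) s) - D (H z t) s) \<le> e"
proof -
  have GL: "\<forall>p\<in>{0..1::real}\<times>{0..1::real}. C1_loop ((\<lambda>(z,t). H z t) p)" using HL by auto
  obtain M0 where M0: "\<forall>p\<in>{0..1::real}\<times>{0..1::real}. \<forall>s. cmod ((\<lambda>(z,t). H z t) p s) \<le> M0 \<and> cmod (D ((\<lambda>(z,t). H z t) p) s) \<le> M0"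
    using UC(1)[OF _ HC GL] by (metis compact_Icc compact_Times)
  define M where "M = max M0 0"
  have M: "M \<ge> 0" "\<And>z t s. z \<in> {0..1} \<Longrightarrow> t \<in> {0..1} \<Longrightarrow> cmod (H z t s) \<le> M \<and> cmod (D (H z t) s) \<le> M"
  proof -
    show "M \<ge> 0" unfolding M_def by simp
    fix z t s assume "z \<in> {0..1::real}" "t \<in> {0..1::real}"
    then have "(z,t) \<in> {0..1::real}\<times>{0..1::real}" by simp
    then have "cmod (H z t s) \<le> M0 \<and> cmod (D (H z t) s) \<le> M0" using M0 by fastforce
    then show "cmod (H z t s) \<le> M \<and> cmod (D (H z t) s) \<le> M" unfolding M_def by auto
  qed
  obtain d where d: "d > 0" "\<forall>p\<in>{0..1::real}\<times>{0..1::real}. \<forall>q\<in>{0..1::real}\<times>{0..1::real}. dist p q < d \<longrightarrow>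
      (\<forall>s. cmod ((\<lambda>(z,t). H z t) p s - (\<lambda>(z,t). H z t) q s) \<le> e/2 \<and> cmod (D ((\<lambda>(z,t). H z t) p) s - D ((\<lambda>(z,t). H z t) q) s) \<le> e/2)"
    using UC(2)[OF _ HC GL] e by (metis compact_Icc compact_Times half_gt_zero)
  define N where "N = Suc (nat \<lceil>4 * M / (d\<^sup>2 * e)\<rceil>)"
  have N: "0 < N" "4 * M / (d\<^sup>2 * e) < N" unfolding N_def by (auto, linarith)
  show ?thesis
  proof (intro exI[of _ N] conjI[OF N(1)] ballI allI)
    fix z t s assume z: "z \<in> {0..1::real}" and t: "t \<in> {0..1::real}"
    have kN: "real k / real N \<in> {0..1}" if "k \<le> N" for k using that N(1) by auto
    have cl: "cmod (H z (k/N) s - H z t s) \<le> e/2 \<and> cmod (D (H z (k/N)) s - D (H z t) s) \<le> e/2"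
      if k: "k \<le> N" and kd: "\<bar>t - k/N\<bar> < d" for k
    proof -
      have "dist (z, real k / real N) (z, t) < d" using kd by (simp add: dist_Pair_Pair dist_real_def abs_minus_commute)
      then show ?thesis using d(2) z t kN[OF k] by fastforce
    qed
    have bd: "cmod (H z (k/N) s - H z t s) \<le> 2 * M \<and> cmod (D (H z (k/N)) s - D (H z t) s) \<le> 2 * M"
      if k: "k \<le> N" for k
      using M(2)[OF z kN[OF k], of s] M(2)[OF z t, of s] norm_triangle_ineq4[of "H z (k/N) s" "H z t s"]
        norm_triangle_ineq4[of "D (H z (k/N)) s" "D (H z t) s"] by linarith
    show "cmod ((\<Sum>k\<le>N. Bernstein N k t *\<^sub>R H z (k/N) s) - H z t s) \<le> e \<and>
     cmod ((\<Sum>k\<le>N. Bernstein N k t *\<^sub>R D (H z (k/N)) s) - D (H z t) s) \<le> e"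
    proof
      show "cmod ((\<Sum>k\<le>N. Bernstein N k t *\<^sub>R H z (k/N) s) - H z t s) \<le> e"
        by (rule bern_apply[OF N(1) _ _ d(1) e M(1) _ _ N(2)]) (use t bd cl in auto)
      show "cmod ((\<Sum>k\<le>N. Bernstein N k t *\<^sub>R D (H z (k/N)) s) - D (H z t) s) \<le> e"
        by (rule bern_apply[OF N(1) _ _ d(1) e M(1) _ _ N(2)]) (use t bd cl in auto)
    qed
  qed
qed



lemma term_deriv: assumes \<phi>: "(\<phi> has_real_derivative \<phi>') (at t)" and G: "C1_loop G"
  shows "((\<lambda>p. \<phi> (fst p) *\<^sub>R G (snd p)) has_derivative
     (\<lambda>q. fst q *\<^sub>R (\<phi>' *\<^sub>R G s) + snd q *\<^sub>R (\<phi> t *\<^sub>R D G s))) (at (t,s) within S)"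
proof -
  have f1: "((\<lambda>p. \<phi> (fst p)) has_derivative (\<lambda>q. \<phi>' * fst q)) (at (t,s) within S)"
    using has_derivative_compose[of fst fst "(t,s)" S \<phi> "(*) \<phi>'"] has_derivative_fst[OF has_derivative_ident]
      \<phi>[unfolded has_field_derivative_def] by simp blast
  have g1: "((\<lambda>p. G (snd p)) has_derivative (\<lambda>q. snd q *\<^sub>R D G s)) (at (t,s) within S)"
    using has_derivative_compose[of snd snd "(t,s)" S G "\<lambda>x. x *\<^sub>R D G s"] has_derivative_snd[OF has_derivative_ident]
      C1_loop_hasD[OF G, of s, unfolded has_vector_derivative_def] by simp blast
  show ?thesis
    by (rule has_derivative_eq_rhs[OF has_derivative_scaleR[OF f1 g1]]) (auto simp: algebra_simps)
qed

definition dB :: "nat \<Rightarrow> nat \<Rightarrow> real \<Rightarrow> real" where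
  "dB n k x = of_nat (n choose k) * (of_nat k * x^(k-1) * (1-x)^(n-k) - of_nat (n-k) * x^k * (1-x)^(n-k-1))"

lemma Bern_deriv: "(Bernstein n k has_real_derivative dB n k x) (at x)"
  unfolding Bernstein_def[abs_def] dB_def
  by (auto intro!: derivative_eq_intros simp: algebra_simps)

lemma dB_cont: "continuous_on A (dB n k)"
  unfolding dB_def[abs_def] by (intro continuous_intros)

lemma Bern_cont: "continuous_on A (Bernstein n k)"
  unfolding Bernstein_def[abs_def] by (intro continuous_intros)

lemma Bern0: "Bernstein n k 0 = (if k = 0 then 1 else 0)"
  by (simp add: Bernstein_def)

lemma Bern1: "k \<le> n \<Longrightarrow> Bernstein n k 1 = (if k = n then 1 else 0)"
  by (simp add: Bernstein_def)

lemma Bern_le1: "0 \<le> x \<Longrightarrow> x \<le> 1 \<Longrightarrow> k \<le> n \<Longrightarrow> Bernstein n k x \<le> 1"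
  using member_le_sum[of k "{..n}" "\<lambda>k. Bernstein n k x"] Bernstein_nonneg by auto



lemma sum_bound: fixes c :: "nat \<Rightarrow> real" and W :: "nat \<Rightarrow> complex"
  assumes "\<And>k. k \<le> N \<Longrightarrow> cmod (W k) \<le> M" "M \<ge> 0"
  shows "cmod (\<Sum>k\<le>N. c k *\<^sub>R W k) \<le> (\<Sum>k\<le>N. \<bar>c k\<bar>) * M"
proof -
  have "cmod (\<Sum>k\<le>N. c k *\<^sub>R W k) \<le> (\<Sum>k\<le>N. cmod (c k *\<^sub>R W k))" by (rule norm_sum)
  also have "\<dots> \<le> (\<Sum>k\<le>N. \<bar>c k\<bar> * M)" using assms by (intro sum_mono) (auto intro: mult_left_mono)
  also have "\<dots> = (\<Sum>k\<le>N. \<bar>c k\<bar>) * M" by (simp add: sum_distrib_right)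
  finally show ?thesis .
qed

lemma famcont_gen:
  fixes u :: "'p \<Rightarrow> complex" and c :: "nat \<Rightarrow> 'p \<Rightarrow> real" and W :: "nat \<Rightarrow> real \<Rightarrow> 'p \<Rightarrow> complex"
    and a b :: "real \<Rightarrow> real"
  assumes aL: "\<forall>z\<in>{0..1}. \<forall>z'\<in>{0..1}. \<bar>a z - a z'\<bar> \<le> 2 * \<bar>z - z'\<bar>"
    and bL: "\<forall>z\<in>{0..1}. \<forall>z'\<in>{0..1}. \<bar>b z - b z'\<bar> \<le> 2 * \<bar>z - z'\<bar>"
    and a01: "\<forall>z\<in>{0..1}. 0 \<le> a z \<and> a z \<le> 1" and b01: "\<forall>z\<in>{0..1}. b z \<in> {0..1}"
    and uM: "\<forall>p\<in>S. cmod (u p) \<le> Mu" and cS: "\<forall>p\<in>S. (\<Sum>k\<le>N. \<bar>c k p\<bar>) \<le> Cs"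
    and WM: "\<forall>w\<in>{0..1}. \<forall>p\<in>S. \<forall>k\<le>N. cmod (W k w p) \<le> M"
    and WU: "\<forall>\<eta>>0. \<exists>d>0. \<forall>w\<in>{0..1}. \<forall>w'\<in>{0..1}. \<bar>w - w'\<bar> < d \<longrightarrow> (\<forall>k\<le>N. \<forall>p\<in>S. cmod (W k w p - W k w' p) \<le> \<eta>)"
    and z: "z \<in> {0..1}" and \<epsilon>: "\<epsilon> > 0"
  shows "\<exists>d>0. \<forall>z'\<in>{0..1}. \<bar>z' - z\<bar> < d \<longrightarrow> (\<forall>p\<in>S.
     cmod (((1 - a z') *\<^sub>R u p + a z' *\<^sub>R (\<Sum>k\<le>N. c k p *\<^sub>R W k (b z') p))
         - ((1 - a z) *\<^sub>R u p + a z *\<^sub>R (\<Sum>k\<le>N. c k p *\<^sub>R W k (b z) p))) \<le> \<epsilon>)"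
proof -
  define Cs' where "Cs' = max Cs 1"
  define M' where "M' = max M 0"
  define Mu' where "Mu' = max Mu 0"
  define K where "K = Mu' + Cs' * M'"
  have Cs': "Cs' > 0" "\<forall>p\<in>S. (\<Sum>k\<le>N. \<bar>c k p\<bar>) \<le> Cs'" using cS unfolding Cs'_def by (simp_all add: le_max_iff_disj)
  have M': "M' \<ge> 0" "\<forall>w\<in>{0..1}. \<forall>p\<in>S. \<forall>k\<le>N. cmod (W k w p) \<le> M'" using WM unfolding M'_def by (simp_all add: le_max_iff_disj)
  have Mu': "Mu' \<ge> 0" "\<forall>p\<in>S. cmod (u p) \<le> Mu'" using uM unfolding Mu'_def by (simp_all add: le_max_iff_disj)
  have K: "K \<ge> 0" unfolding K_def using Cs' M' Mu' by simp
  define V where "V w p = (\<Sum>k\<le>N. c k p *\<^sub>R W k w p)" for w p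
  have VM: "cmod (V w p) \<le> Cs' * M'" if "w \<in> {0..1}" "p \<in> S" for w p
  proof -
    have "cmod (V w p) \<le> (\<Sum>k\<le>N. \<bar>c k p\<bar>) * M'" unfolding V_def
      by (rule sum_bound) (use M' that in auto)
    also have "\<dots> \<le> Cs' * M'" using Cs' M' that by (intro mult_right_mono) auto
    finally show ?thesis .
  qed
  obtain d1 where d1: "d1 > 0" "\<forall>w\<in>{0..1}. \<forall>w'\<in>{0..1}. \<bar>w - w'\<bar> < d1 \<longrightarrow> (\<forall>k\<le>N. \<forall>p\<in>S. cmod (W k w p - W k w' p) \<le> \<epsilon> / (2 * Cs'))"
    using WU[rule_format, of "\<epsilon> / (2 * Cs')"] Cs' \<epsilon> by auto
  have VU: "cmod (V w p - V w' p) \<le> \<epsilon>/2" if "w \<in> {0..1}" "w' \<in> {0..1}" "\<bar>w - w'\<bar> < d1" "p \<in> S" for w w' p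
  proof -
    have "V w p - V w' p = (\<Sum>k\<le>N. c k p *\<^sub>R (W k w p - W k w' p))"
      unfolding V_def by (simp add: scaleR_diff_right sum_subtractf)
    also have "cmod \<dots> \<le> (\<Sum>k\<le>N. \<bar>c k p\<bar>) * (\<epsilon> / (2 * Cs'))"
      by (rule sum_bound) (use d1 that \<epsilon> Cs' in auto)
    also have "\<dots> \<le> Cs' * (\<epsilon> / (2 * Cs'))" using Cs' that \<epsilon> by (intro mult_right_mono) auto
    also have "\<dots> = \<epsilon>/2" using Cs' by simp
    finally show ?thesis .
  qed
  define d where "d = min (d1/2) (\<epsilon> / (4 * K + 1))"
  show ?thesis
  proof (intro exI[of _ d] conjI ballI impI)
    show "d > 0" unfolding d_def using d1 \<epsilon> K by simp
    fix z' p assume z': "z' \<in> {0..1}" and zz: "\<bar>z' - z\<bar> < d" and p: "p \<in> S"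
    have ab: "\<bar>a z - a z'\<bar> \<le> 2 * \<bar>z' - z\<bar>" "\<bar>b z' - b z\<bar> \<le> 2 * \<bar>z' - z\<bar>"
      using aL bL z z' by (auto simp: abs_minus_commute)
    have "\<bar>z' - z\<bar> < d1/2" using zz unfolding d_def by simp
    then have "2 * \<bar>z' - z\<bar> < d1" by simp
    then have bd: "\<bar>b z' - b z\<bar> < d1" by (rule le_less_trans[OF ab(2)])
    have eq: "((1 - a z') *\<^sub>R u p + a z' *\<^sub>R V (b z') p) - ((1 - a z) *\<^sub>R u p + a z *\<^sub>R V (b z) p)
        = (a z - a z') *\<^sub>R (u p - V (b z') p) + a z *\<^sub>R (V (b z') p - V (b z) p)"
      by (simp add: algebra_simps)
    have n1: "cmod ((a z - a z') *\<^sub>R (u p - V (b z') p)) \<le> (2 * \<bar>z' - z\<bar>) * K"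
    proof -
      have "cmod (u p - V (b z') p) \<le> K" unfolding K_def
        using norm_triangle_ineq4[of "u p" "V (b z') p"] Mu'(2) p VM[of "b z'" p] b01 z' by fastforce
      then show ?thesis using ab(1) K by (simp add: mult_mono)
    qed
    have n2: "cmod (a z *\<^sub>R (V (b z') p - V (b z) p)) \<le> \<epsilon>/2"
    proof -
      have "cmod (V (b z') p - V (b z) p) \<le> \<epsilon>/2" using VU[of "b z'" "b z" p] b01 z z' bd p by auto
      moreover have "\<bar>a z\<bar> \<le> 1" using a01 z by auto
      moreover have "\<bar>a z\<bar> * cmod (V (b z') p - V (b z) p) \<le> cmod (V (b z') p - V (b z) p)"
        by (rule mult_left_le_one_le) (use \<open>\<bar>a z\<bar> \<le> 1\<close> in auto)
      ultimately show ?thesis by simp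
    qed
    have n3: "(2 * \<bar>z' - z\<bar>) * K \<le> \<epsilon>/2"
    proof -
      have "\<bar>z' - z\<bar> * (4 * K + 1) \<le> \<epsilon>"
        using zz K \<epsilon> unfolding d_def by (simp add: field_simps)
      then have "\<bar>z' - z\<bar> * (4 * K) \<le> \<epsilon>" by (smt (verit) abs_ge_zero distrib_left mult_nonneg_nonneg)
      then show ?thesis by simp
    qed
    have "cmod (((1 - a z') *\<^sub>R u p + a z' *\<^sub>R V (b z') p) - ((1 - a z) *\<^sub>R u p + a z *\<^sub>R V (b z) p)) \<le> \<epsilon>"
      unfolding eq using n1 n2 n3 norm_triangle_ineq[of "(a z - a z') *\<^sub>R (u p - V (b z') p)" "a z *\<^sub>R (V (b z') p - V (b z) p)"]
      by linarith
    then show "cmod (((1 - a z') *\<^sub>R u p + a z' *\<^sub>R (\<Sum>k\<le>N. c k p *\<^sub>R W k (b z') p))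
         - ((1 - a z) *\<^sub>R u p + a z *\<^sub>R (\<Sum>k\<le>N. c k p *\<^sub>R W k (b z) p))) \<le> \<epsilon>"
      unfolding V_def .
  qed
qed



lemma GAM:
  fixes \<gamma> :: "real \<Rightarrow> real \<Rightarrow> complex"
  assumes C: "C1_with_derivs ({0..1}\<times>UNIV) (\<lambda>(t,s). \<gamma> t s) Ft Fs"
    and L: "\<forall>t\<in>{0..1}. C1_loop (\<gamma> t)" and PC: "C1_continuous_on {0..1} \<gamma>"
  shows "\<forall>t\<in>{0..1}. \<forall>s. Fs (t,s) = D (\<gamma> t) s"
    and "\<exists>M. \<forall>t\<in>{0..1}. \<forall>s. cmod (\<gamma> t s) \<le> M \<and> cmod (Ft (t,s)) \<le> M \<and> cmod (Fs (t,s)) \<le> M"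
proof -
  let ?S = "{0..1::real}\<times>(UNIV::real set)"
  have hd: "((\<lambda>(t,s). \<gamma> t s) has_derivative (\<lambda>(a, b). a *\<^sub>R Ft (t,s) + b *\<^sub>R Fs (t,s))) (at (t,s) within ?S)"
    if "t \<in> {0..1}" for t s :: real
    using C that unfolding C1_with_derivs_def by auto
  have cFt: "continuous_on ?S Ft" using C unfolding C1_with_derivs_def by auto
  show Fs: "\<forall>t\<in>{0..1}. \<forall>s. Fs (t,s) = D (\<gamma> t) s"
  proof (intro ballI allI)
    fix t s :: real assume t: "t \<in> {0..1::real}"
    have i: "((\<lambda>s. (t,s)) has_derivative (\<lambda>y. (0,y))) (at s within UNIV)"
      by (auto intro!: derivative_eq_intros)
    have "(\<lambda>s. (t,s)) ` UNIV \<subseteq> ?S" using t by auto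
    then have "((\<lambda>(t,s). \<gamma> t s) has_derivative (\<lambda>(a, b). a *\<^sub>R Ft (t,s) + b *\<^sub>R Fs (t,s))) (at ((\<lambda>s. (t,s)) s) within (\<lambda>s. (t,s)) ` UNIV)"
      using hd[OF t, of s] by (auto intro: has_derivative_subset)
    from diff_chain_within[OF i this]
    have "(\<gamma> t has_derivative (\<lambda>y. y *\<^sub>R Fs (t,s))) (at s)" by (simp add: o_def)
    then have "(\<gamma> t has_vector_derivative Fs (t,s)) (at s)" by (simp add: has_vector_derivative_def)
    then show "Fs (t,s) = D (\<gamma> t) s" by (simp add: vector_derivative_at)
  qed
  have Ftv: "(( \<lambda>t'. \<gamma> t' s) has_vector_derivative Ft (t,s)) (at t within {0..1})" if t: "t \<in> {0..1}" for t s :: real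
  proof -
    have i: "((\<lambda>t'. (t',s)) has_derivative (\<lambda>y. (y,0))) (at t within {0..1})"
      by (auto intro!: derivative_eq_intros)
    have "(\<lambda>t'. (t',s)) ` {0..1} \<subseteq> ?S" by auto
    then have "((\<lambda>(t,s). \<gamma> t s) has_derivative (\<lambda>(a, b). a *\<^sub>R Ft (t,s) + b *\<^sub>R Fs (t,s))) (at ((\<lambda>t'. (t',s)) t) within (\<lambda>t'. (t',s)) ` {0..1})"
      using hd[OF t, of s] by (auto intro: has_derivative_subset)
    from diff_chain_within[OF i this]
    have "((\<lambda>t'. \<gamma> t' s) has_derivative (\<lambda>y. y *\<^sub>R Ft (t,s))) (at t within {0..1})" by (simp add: o_def)
    then show ?thesis by (simp add: has_vector_derivative_def)
  qed
  have Ftper: "Ft (t, s+1) = Ft (t,s)" if t: "t \<in> {0..1}" for t s :: real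
  proof -
    have a: "(( \<lambda>t'. \<gamma> t' (s+1)) has_vector_derivative Ft (t,s+1)) (at t within {0..1})" by (rule Ftv[OF t])
    have b: "(( \<lambda>t'. \<gamma> t' (s+1)) has_vector_derivative Ft (t,s)) (at t within {0..1})"
      unfolding has_vector_derivative_def
      by (rule has_derivative_transform_within[OF Ftv[OF t, of s, unfolded has_vector_derivative_def], of 1])
         (use t L C1_loop_per in \<open>auto, metis atLeastAtMost_iff\<close>)
    show ?thesis
      by (rule vector_derivative_unique_within_closed_interval[of 0 1 t]) (use a b t in \<open>auto simp: cbox_interval\<close>)
  qed
  obtain M1 where M1: "\<forall>t\<in>{0..1}. \<forall>s. cmod (\<gamma> t s) \<le> M1 \<and> cmod (D (\<gamma> t) s) \<le> M1"
    using UC(1)[OF compact_Icc PC L] by blast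
  have KC: "compact ({0..1::real}\<times>{0..1::real})" by (intro compact_Times) auto
  have "continuous_on ({0..1::real}\<times>{0..1::real}) Ft" by (rule continuous_on_subset[OF cFt]) auto
  then have "bounded (Ft ` ({0..1::real}\<times>{0..1::real}))" by (rule compact_imp_bounded[OF compact_continuous_image[OF _ KC]])
  then obtain M2 where M2: "\<forall>x\<in>{0..1::real}\<times>{0..1::real}. norm (Ft x) \<le> M2"
    unfolding bounded_iff by auto
  show "\<exists>M. \<forall>t\<in>{0..1}. \<forall>s. cmod (\<gamma> t s) \<le> M \<and> cmod (Ft (t,s)) \<le> M \<and> cmod (Fs (t,s)) \<le> M"
  proof (intro exI[of _ "max M1 M2"] ballI allI)
    fix t and s :: real assume t: "t \<in> {0..1::real}"
    have "Ft (t,s) = Ft (t, s - of_int (floor s))"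
      using per_frac[where f="\<lambda>s. Ft (t,s)"] Ftper[OF t] by blast
    moreover have "(t, s - of_int (floor s)) \<in> {0..1::real}\<times>{0..1::real}" using t frac_in by auto
    ultimately have "cmod (Ft (t,s)) \<le> M2" using M2 by metis
    then show "cmod (\<gamma> t s) \<le> max M1 M2 \<and> cmod (Ft (t,s)) \<le> max M1 M2 \<and> cmod (Fs (t,s)) \<le> max M1 M2"
      using M1 t Fs by (auto simp: le_max_iff_disj)
  qed
qed



lemma ab_facts:
  fixes a b :: "real \<Rightarrow> real"
  assumes a: "a = (\<lambda>z. min 1 (2*z))" and b: "b = (\<lambda>z. max 0 (2*z - 1))"
  shows "\<forall>z\<in>{0..1}. 0 \<le> a z \<and> a z \<le> 1" "\<forall>z\<in>{0..1}. b z \<in> {0..1}"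
    "\<forall>z\<in>{0..1}. a z < 1 \<longrightarrow> b z = 0" "a 0 = 0" "a 1 = 1" "b 1 = 1"
    "\<forall>z\<in>{0..1}. \<forall>z'\<in>{0..1}. \<bar>a z - a z'\<bar> \<le> 2 * \<bar>z - z'\<bar>"
    "\<forall>z\<in>{0..1}. \<forall>z'\<in>{0..1}. \<bar>b z - b z'\<bar> \<le> 2 * \<bar>z - z'\<bar>"
  unfolding a b by (auto simp: min_def max_def abs_if)

lemma kN_in: "0 < N \<Longrightarrow> k \<le> N \<Longrightarrow> real k / real N \<in> {0..1::real}"
  by auto

lemma cont_snd: "continuous_on UNIV f \<Longrightarrow> continuous_on A (\<lambda>p. f (snd p))"
  by (rule continuous_on_compose2[of UNIV f A snd]) (auto intro: continuous_intros)

lemma cont_fst: "continuous_on UNIV f \<Longrightarrow> continuous_on A (\<lambda>p. f (fst p))"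
  by (rule continuous_on_compose2[of UNIV f A fst]) (auto intro: continuous_intros)

lemma ht1_cont: fixes H :: "real \<Rightarrow> real \<Rightarrow> real \<Rightarrow> complex" assumes "C1_continuous_on ({0..1} \<times> {0..1}) (\<lambda>(z, t). H z t)"
  shows "C1_continuous_on {0..1} (H 1)"
  unfolding C1_continuous_on_def
proof (intro ballI allI impI)
  fix x e assume x: "x \<in> {0..1::real}" and e: "(0::real) < e"
  obtain d where d: "d > 0" "\<forall>y\<in>{0..1}\<times>{0..1}. dist y (1,x) < d \<longrightarrow> c1dist ((\<lambda>(z, t). H z t) y) ((\<lambda>(z, t). H z t) (1,x)) < e"
    using assms x e unfolding C1_continuous_on_def by (metis atLeastAtMost_iff mem_Sigma_iff order_refl zero_le_one)
  show "\<exists>d>0. \<forall>y\<in>{0..1}. dist y x < d \<longrightarrow> c1dist (H 1 y) (H 1 x) < e"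
  proof (intro exI[of _ d] conjI ballI impI)
    fix y assume y: "y \<in> {0..1::real}" "dist y x < d"
    have "dist (1::real, y) (1, x) = dist y x" by (simp add: dist_Pair_Pair)
    then show "c1dist (H 1 y) (H 1 x) < e" using d y by auto
  qed (use d in auto)
qed



theorem mainTheorem4:
  fixes n :: int
    and \<gamma> :: "real \<Rightarrow> real \<Rightarrow> complex"
    and ht :: "real \<Rightarrow> real \<Rightarrow> real \<Rightarrow> complex"
  assumes path_in: "\<forall>t\<in>{0..1}. \<gamma> t \<in> Imm n"
    and path_cont: "C1_continuous_on {0..1} \<gamma>"
    and ht_in: "\<forall>z\<in>{0..1}. \<forall>t\<in>{0..1}. ht z t \<in> Imm n"
    and ht_cont: "C1_continuous_on ({0..1} \<times> {0..1}) (\<lambda>(z, t). ht z t)"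
    and ht_start: "\<forall>t\<in>{0..1}. ht 0 t = \<gamma> t"
    and C1: "C1_on ({0..1} \<times> UNIV) (\<lambda>(t, s). \<gamma> t s)"
    and emb_end: "\<forall>t\<in>{0..1}. embedding_loop (ht 1 t)"
    and emb_sides: "\<forall>z\<in>{0..1}. embedding_loop (ht z 0) \<and> embedding_loop (ht z 1)"
  shows "\<exists>h :: real \<Rightarrow> real \<Rightarrow> real \<Rightarrow> complex. \<exists>Ht Hs.
     (\<forall>z\<in>{0..1}. \<forall>t\<in>{0..1}. h z t \<in> Imm n)
   \<and> (\<forall>t\<in>{0..1}. h 0 t = \<gamma> t)
   \<and> (\<forall>z\<in>{0..1}. C1_with_derivs ({0..1} \<times> UNIV) (\<lambda>(t, s). h z t s) (Ht z) (Hs z))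
   \<and> C1_family_continuous {0..1} ({0..1} \<times> UNIV) (\<lambda>z (t, s). h z t s) Ht Hs
   \<and> (\<forall>t\<in>{0..1}. embedding_loop (h 1 t))
   \<and> (\<forall>z\<in>{0..1}. embedding_loop (h z 0) \<and> embedding_loop (h z 1))"
proof -
  let ?Sq = "{0..1::real}\<times>{0..1::real}"
  let ?S = "{0..1::real}\<times>(UNIV::real set)"
  have KC: "compact ?Sq" by (intro compact_Times) auto
  have HL: "\<forall>z\<in>{0..1}. \<forall>t\<in>{0..1}. C1_loop (ht z t)" using ht_in by (auto simp: Imm_def)
  have gL: "\<forall>t\<in>{0..1}. C1_loop (\<gamma> t)" using path_in by (auto simp: Imm_def)
  have FL1: "\<forall>p\<in>?Sq. C1_loop ((\<lambda>(z,t). ht z t) p)" using HL by auto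
  have loc1: "\<forall>p\<in>?Sq. \<exists>\<delta>>0. \<forall>g. C1_loop g \<and> (\<exists>c>0. D g 0 = of_real c) \<and> near \<delta> g ((\<lambda>(z,t). ht z t) p) \<longrightarrow> g \<in> Imm n"
  proof
    fix p assume p: "p \<in> ?Sq"
    then have "(\<lambda>(z,t). ht z t) p \<in> Imm n" using ht_in by auto
    from imm_open[OF this] show "\<exists>\<delta>>0. \<forall>g. C1_loop g \<and> (\<exists>c>0. D g 0 = of_real c) \<and> near \<delta> g ((\<lambda>(z,t). ht z t) p) \<longrightarrow> g \<in> Imm n"
      unfolding near_def by meson
  qed
  obtain \<delta>1 where \<delta>1: "\<delta>1 > 0" "\<forall>p\<in>?Sq. \<forall>g. C1_loop g \<and> (\<exists>c>0. D g 0 = of_real c) \<and> near \<delta>1 g ((\<lambda>(z,t). ht z t) p) \<longrightarrow> g \<in> Imm n"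
    using unif[OF KC ht_cont FL1 loc1] by blast
  have loc2: "\<forall>p\<in>{0..1}. \<exists>\<delta>>0. \<forall>g. C1_loop g \<and> True \<and> near \<delta> g (ht 1 p) \<longrightarrow> embedding_loop g"
  proof
    fix p :: real assume p: "p \<in> {0..1}"
    then have "ht 1 p \<in> Imm n" using ht_in by auto
    then have "C1_loop (ht 1 p)" "\<forall>s. D (ht 1 p) s \<noteq> 0" by (auto simp: Imm_def)
    from emb_open[OF this emb_end[rule_format, OF p]]
    show "\<exists>\<delta>>0. \<forall>g. C1_loop g \<and> True \<and> near \<delta> g (ht 1 p) \<longrightarrow> embedding_loop g"
      unfolding near_def by meson
  qed
  obtain \<delta>2 where \<delta>2: "\<delta>2 > 0" "\<forall>p\<in>{0..1}. \<forall>g. C1_loop g \<and> True \<and> near \<delta>2 g (ht 1 p) \<longrightarrow> embedding_loop g"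
    using unif[OF compact_Icc ht1_cont[OF ht_cont], of "\<lambda>_. True" embedding_loop] HL loc2 by auto
  define e where "e = min \<delta>1 \<delta>2"
  have e: "e > 0" "e \<le> \<delta>1" "e \<le> \<delta>2" using \<delta>1 \<delta>2 unfolding e_def by auto
  obtain N where N: "N > 0" "\<forall>z\<in>{0..1}. \<forall>t\<in>{0..1}. \<forall>s.
     cmod ((\<Sum>k\<le>N. Bernstein N k t *\<^sub>R ht z (k/N) s) - ht z t s) \<le> e \<and>
     cmod ((\<Sum>k\<le>N. Bernstein N k t *\<^sub>R D (ht z (k/N)) s) - D (ht z t) s) \<le> e"
    using APX[OF ht_cont HL e(1)] by blast
  obtain Ft Fs where C: "C1_with_derivs ?S (\<lambda>(t,s). \<gamma> t s) Ft Fs" using C1 unfolding C1_on_def by blast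
  define a where "a = (\<lambda>z::real. min 1 (2*z))"
  define b where "b = (\<lambda>z::real. max 0 (2*z - 1))"
  note ab = ab_facts[OF a_def b_def]
  define S where "S w t s = (\<Sum>k\<le>N. Bernstein N k t *\<^sub>R ht w (real k / real N) s)" for w t s
  define h where "h z t s = (1 - a z) *\<^sub>R \<gamma> t s + a z *\<^sub>R S (b z) t s" for z t s
  define Ht where "Ht z p = (1 - a z) *\<^sub>R Ft p + a z *\<^sub>R (\<Sum>k\<le>N. dB N k (fst p) *\<^sub>R ht (b z) (real k / real N) (snd p))" for z p
  define Hs where "Hs z p = (1 - a z) *\<^sub>R Fs p + a z *\<^sub>R (\<Sum>k\<le>N. Bernstein N k (fst p) *\<^sub>R D (ht (b z) (real k / real N)) (snd p))" for z p
  have kN: "\<And>k. k \<le> N \<Longrightarrow> real k / real N \<in> {0..1}" using kN_in N(1) by blast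
  have SL: "C1_loop (S w t)" "D (S w t) s = (\<Sum>k\<le>N. Bernstein N k t *\<^sub>R D (ht w (real k / real N)) s)"
    if w: "w \<in> {0..1}" for w t s
  proof -
    have eq: "S w t = (\<lambda>s. \<Sum>k\<le>N. Bernstein N k t *\<^sub>R ht w (real k / real N) s)" by (rule ext) (simp add: S_def)
    have G: "\<forall>k\<in>{..N}. C1_loop (ht w (real k / real N))" using HL w kN by auto
    show "C1_loop (S w t)" unfolding eq by (rule C1_sum(1)[OF _ G]) simp
    show "D (S w t) s = (\<Sum>k\<le>N. Bernstein N k t *\<^sub>R D (ht w (real k / real N)) s)" unfolding eq by (rule C1_sum(2)[OF _ G]) simp
  qed
  have hform: "h z t = (\<lambda>s. (1 - a z) *\<^sub>R ht (b z) t s + a z *\<^sub>R S (b z) t s)"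
    if z: "z \<in> {0..1}" and t: "t \<in> {0..1}" for z t
  proof (rule ext)
    fix s
    show "h z t s = (1 - a z) *\<^sub>R ht (b z) t s + a z *\<^sub>R S (b z) t s"
    proof (cases "a z < 1")
      case True then have "b z = 0" using ab(3) z by auto
      then show ?thesis using ht_start t unfolding h_def by simp
    next
      case False then have "a z = 1" using ab(1) z by force
      then show ?thesis unfolding h_def by simp
    qed
  qed
  have hL: "C1_loop (h z t)" "D (h z t) s = (1 - a z) *\<^sub>R D (ht (b z) t) s + a z *\<^sub>R D (S (b z) t) s"
    if z: "z \<in> {0..1}" and t: "t \<in> {0..1}" for z t s
    using C1_lin[OF HL[rule_format, OF ab(2)[rule_format, OF z] t] SL(1)[OF ab(2)[rule_format, OF z]]]
    unfolding hform[OF z t] by auto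
  have hnear: "near e (h z t) (ht (b z) t)" if z: "z \<in> {0..1}" and t: "t \<in> {0..1}" for z t
    unfolding near_def
  proof
    fix s
    define w where "w = b z"
    have w: "w \<in> {0..1}" using ab(2) z unfolding w_def by auto
    have az: "\<bar>a z\<bar> \<le> 1" using ab(1) z by auto
    have n1: "cmod (S w t s - ht w t s) \<le> e" using N(2) w t unfolding S_def by auto
    have n2: "cmod (D (S w t) s - D (ht w t) s) \<le> e" using N(2) w t SL(2)[OF w] by auto
    have eq1: "h z t s - ht w t s = a z *\<^sub>R (S w t s - ht w t s)"
      unfolding hform[OF z t] w_def by (simp add: algebra_simps)
    have eq2: "D (h z t) s - D (ht w t) s = a z *\<^sub>R (D (S w t) s - D (ht w t) s)"
      unfolding hL(2)[OF z t] w_def by (simp add: algebra_simps)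
    have m: "cmod (a z *\<^sub>R X) \<le> cmod X" for X :: complex
      using az by (simp add: mult_left_le_one_le)
    show "cmod (h z t s - ht (b z) t s) \<le> e \<and> cmod (D (h z t) s - D (ht (b z) t) s) \<le> e"
      using eq1 eq2 m[of "S w t s - ht w t s"] m[of "D (S w t) s - D (ht w t) s"] n1 n2
      unfolding w_def by auto
  qed
  have rpos: "D (ht w u) 0 = of_real (Re (D (ht w u) 0)) \<and> Re (D (ht w u) 0) > 0"
    if "w \<in> {0..1}" "u \<in> {0..1}" for w u
  proof -
    have "ht w u \<in> Imm n" using ht_in that by blast
    then obtain c where "c > 0" "D (ht w u) 0 = of_real c" unfolding Imm_def by blast
    then show ?thesis by simp
  qed
  have hpos: "\<exists>c>0. D (h z t) 0 = of_real c" if z: "z \<in> {0..1}" and t: "t \<in> {0..1}" for z t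
  proof -
    define w where "w = b z"
    have w: "w \<in> {0..1}" using ab(2) z unfolding w_def by auto
    define r where "r u = Re (D (ht w u) 0)" for u
    have rk: "D (ht w (real k / real N)) 0 = of_real (r (real k / real N)) \<and> r (real k / real N) > 0" if "k \<le> N" for k
      using rpos[OF w kN[OF that]] unfolding r_def by blast
    have rt: "D (ht w t) 0 = of_real (r t) \<and> r t > 0" using rpos[OF w t] unfolding r_def by blast
    define c where "c = (1 - a z) * r t + a z * (\<Sum>k\<le>N. Bernstein N k t * r (real k / real N))"
    have "(\<Sum>k\<le>N. Bernstein N k t *\<^sub>R D (ht w (real k / real N)) 0) = (\<Sum>k\<le>N. of_real (Bernstein N k t * r (real k / real N)))"
      using rk by (intro sum.cong) (auto simp: scaleR_conv_of_real)
    then have "D (h z t) 0 = of_real c"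
      unfolding hL(2)[OF z t] w_def[symmetric] SL(2)[OF w] c_def
      using rt by (simp add: scaleR_conv_of_real of_real_sum[symmetric])
    moreover have "c > 0"
    proof -
      have t01: "0 \<le> t" "t \<le> 1" using t by auto
      have sp: "(\<Sum>k\<le>N. Bernstein N k t * r (real k / real N)) \<ge> 0"
        using rk Bernstein_nonneg[OF t01] by (intro sum_nonneg) (meson atMost_iff less_imp_le mult_nonneg_nonneg)
      show ?thesis
      proof (cases "a z < 1")
        case True
        then have "(1 - a z) * r t > 0" using rt by simp
        moreover have "a z * (\<Sum>k\<le>N. Bernstein N k t * r (real k / real N)) \<ge> 0" using sp ab(1) z by simp
        ultimately show ?thesis unfolding c_def by linarith
      next
        case False
        then have az: "a z = 1" using ab(1) z by force
        obtain k where k: "k \<le> N" "Bernstein N k t > 0"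
        proof (rule ccontr)
          assume "\<not> thesis"
          then have "\<forall>k\<le>N. Bernstein N k t \<le> 0" using that by force
          then have "(\<Sum>k\<le>N. Bernstein N k t) \<le> 0" by (intro sum_nonpos) auto
          then show False by simp
        qed
        have "(\<Sum>k\<le>N. Bernstein N k t * r (real k / real N)) > 0"
          by (rule sum_pos2[of _ k]) (use k rk Bernstein_nonneg[OF t01] in \<open>auto intro: less_imp_le mult_nonneg_nonneg\<close>)
        then show ?thesis unfolding c_def az by simp
      qed
    qed
    ultimately show ?thesis by blast
  qed
  have hImm: "h z t \<in> Imm n" if z: "z \<in> {0..1}" and t: "t \<in> {0..1}" for z t
  proof -
    have "near \<delta>1 (h z t) (ht (b z) t)" using hnear[OF z t] e(2) unfolding near_def by (meson order_trans)
    moreover have "(b z, t) \<in> ?Sq" using ab(2) z t by auto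
    ultimately show ?thesis using \<delta>1(2) hL(1)[OF z t] hpos[OF z t] by fastforce
  qed
  have Sside0: "S w 0 s = ht w 0 s" for w s
  proof -
    have "S w 0 s = (\<Sum>k\<le>N. (if k = 0 then ht w (real k / real N) s else 0))"
      unfolding S_def by (rule sum.cong) (auto simp: Bern0)
    also have "\<dots> = ht w 0 s" by (simp add: sum.delta')
    finally show ?thesis .
  qed
  have Sside1: "S w 1 s = ht w 1 s" for w s
  proof -
    have "S w 1 s = (\<Sum>k\<le>N. (if k = N then ht w (real k / real N) s else 0))"
      unfolding S_def by (rule sum.cong) (auto simp: Bern1)
    also have "\<dots> = ht w 1 s" using N(1) by (simp add: sum.delta')
    finally show ?thesis .
  qed
  have hside: "h z 0 = ht (b z) 0 \<and> h z 1 = ht (b z) 1" if z: "z \<in> {0..1}" for z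
    using hform[OF z, of 0] hform[OF z, of 1] Sside0 Sside1 by (auto simp: fun_eq_iff algebra_simps)
  show ?thesis
  proof (rule exI[of _ h], rule exI[of _ Ht], rule exI[of _ Hs], intro conjI)
    show "\<forall>z\<in>{0..1}. \<forall>t\<in>{0..1}. h z t \<in> Imm n" using hImm by blast
    show "\<forall>t\<in>{0..1}. h 0 t = \<gamma> t" using ab(4) by (auto simp: h_def fun_eq_iff)
    show "\<forall>t\<in>{0..1}. embedding_loop (h 1 t)"
    proof
      fix t :: real assume t: "t \<in> {0..1}"
      have "near \<delta>2 (h 1 t) (ht 1 t)" using hnear[OF _ t, of 1] ab(6) e(3) unfolding near_def by (auto intro: order_trans)
      then show "embedding_loop (h 1 t)" using \<delta>2(2) t hL(1)[OF _ t, of 1] by auto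
    qed
    show "\<forall>z\<in>{0..1}. embedding_loop (h z 0) \<and> embedding_loop (h z 1)"
      using hside emb_sides ab(2) by auto
    show "\<forall>z\<in>{0..1}. C1_with_derivs ?S (\<lambda>(t, s). h z t s) (Ht z) (Hs z)"
    proof
      fix z :: real assume z: "z \<in> {0..1}"
      define w where "w = b z"
      have w: "w \<in> {0..1}" using ab(2) z unfolding w_def by auto
      have WL: "C1_loop (ht w (real k / real N))" if "k \<le> N" for k using HL w kN[OF that] by blast
      have feq: "(\<lambda>(t, s). h z t s) = (\<lambda>q. (1 - a z) *\<^sub>R (\<lambda>(t,s). \<gamma> t s) q
          + a z *\<^sub>R (\<Sum>k\<le>N. Bernstein N k (fst q) *\<^sub>R ht w (real k / real N) (snd q)))"
        by (auto simp: fun_eq_iff h_def S_def w_def)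
      have cFt: "continuous_on ?S Ft" and cFs: "continuous_on ?S Fs" using C unfolding C1_with_derivs_def by auto
      have "((\<lambda>(t, s). h z t s) has_derivative (\<lambda>(x, y). x *\<^sub>R Ht z p + y *\<^sub>R Hs z p)) (at p within ?S)"
        if p: "p \<in> ?S" for p
      proof -
        obtain t s where ts: "p = (t,s)" by force
        have G1: "((\<lambda>(t,s). \<gamma> t s) has_derivative (\<lambda>(x, y). x *\<^sub>R Ft p + y *\<^sub>R Fs p)) (at p within ?S)"
          using C p unfolding C1_with_derivs_def by auto
        have G2: "((\<lambda>q. Bernstein N k (fst q) *\<^sub>R ht w (real k / real N) (snd q)) has_derivative
            (\<lambda>q. fst q *\<^sub>R (dB N k t *\<^sub>R ht w (real k / real N) s) + snd q *\<^sub>R (Bernstein N k t *\<^sub>R D (ht w (real k / real N)) s)))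
            (at p within ?S)" if "k \<in> {..N}" for k
          unfolding ts by (rule term_deriv[OF Bern_deriv WL]) (use that in auto)
        show ?thesis unfolding feq
          by (rule has_derivative_eq_rhs[OF has_derivative_add[OF has_derivative_scaleR_right[OF G1]
                has_derivative_scaleR_right[OF has_derivative_sum[OF G2]]]])
             (auto simp: fun_eq_iff Ht_def Hs_def ts w_def algebra_simps scaleR_sum_right sum.distrib)
      qed
      moreover have "continuous_on ?S (Ht z)" unfolding Ht_def w_def[symmetric]
        using WL by (intro continuous_intros cFt cont_fst[OF dB_cont] cont_snd[OF C1_loop_cont]) auto
      moreover have "continuous_on ?S (Hs z)" unfolding Hs_def w_def[symmetric]
        using WL by (intro continuous_intros cFs cont_fst[OF Bern_cont] cont_snd[OF C1_loop_contD]) auto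
      ultimately show "C1_with_derivs ?S (\<lambda>(t, s). h z t s) (Ht z) (Hs z)"
        unfolding C1_with_derivs_def by blast
    qed
    show "C1_family_continuous {0..1} ?S (\<lambda>z (t, s). h z t s) Ht Hs"
      unfolding C1_family_continuous_def
    proof (intro ballI allI impI)
      fix z \<epsilon> :: real assume z: "z \<in> {0..1}" and \<epsilon>: "\<epsilon> > 0"
      obtain Mg where Mg: "\<forall>t\<in>{0..1}. \<forall>s. cmod (\<gamma> t s) \<le> Mg \<and> cmod (Ft (t,s)) \<le> Mg \<and> cmod (Fs (t,s)) \<le> Mg"
        using GAM(2)[OF C gL path_cont] by blast
      obtain M where M: "\<forall>p\<in>?Sq. \<forall>s. cmod ((\<lambda>(z,t). ht z t) p s) \<le> M \<and> cmod (D ((\<lambda>(z,t). ht z t) p) s) \<le> M"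
        using UC(1)[OF KC ht_cont FL1] by blast
      have UC2: "\<forall>e>0. \<exists>d>0. \<forall>p\<in>?Sq. \<forall>q\<in>?Sq. dist p q < d \<longrightarrow> (\<forall>s. cmod ((\<lambda>(z,t). ht z t) p s - (\<lambda>(z,t). ht z t) q s) \<le> e \<and> cmod (D ((\<lambda>(z,t). ht z t) p) s - D ((\<lambda>(z,t). ht z t) q) s) \<le> e)"
        using UC(2)[OF KC ht_cont FL1] .
      have "continuous_on {0..1} (\<lambda>t. \<Sum>k\<le>N. \<bar>dB N k t\<bar>)" by (intro continuous_intros dB_cont)
      then have "bounded ((\<lambda>t. \<Sum>k\<le>N. \<bar>dB N k t\<bar>) ` {0..1})" by (rule compact_imp_bounded[OF compact_continuous_image[OF _ compact_Icc]])
      then obtain Cd where Cd: "\<forall>t\<in>{0..1}. norm (\<Sum>k\<le>N. \<bar>dB N k t\<bar>) \<le> Cd" unfolding bounded_iff by auto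
      have cdS: "\<forall>p\<in>?S. (\<Sum>k\<le>N. \<bar>dB N k (fst p)\<bar>) \<le> Cd" using Cd by fastforce
      have cbS: "\<forall>p\<in>?S. (\<Sum>k\<le>N. \<bar>Bernstein N k (fst p)\<bar>) \<le> 1"
      proof
        fix p assume p: "p \<in> ?S"
        then have "0 \<le> fst p" "fst p \<le> 1" by auto
        then show "(\<Sum>k\<le>N. \<bar>Bernstein N k (fst p)\<bar>) \<le> 1" using Bernstein_nonneg by simp
      qed
      have WM1: "\<forall>w\<in>{0..1}. \<forall>p\<in>?S. \<forall>k\<le>N. cmod (ht w (real k / real N) (snd p)) \<le> M"
        and WM2: "\<forall>w\<in>{0..1}. \<forall>p\<in>?S. \<forall>k\<le>N. cmod (D (ht w (real k / real N)) (snd p)) \<le> M"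
        using M kN by fastforce+
      have WU1: "\<forall>\<eta>>0. \<exists>d>0. \<forall>w\<in>{0..1}. \<forall>w'\<in>{0..1}. \<bar>w - w'\<bar> < d \<longrightarrow> (\<forall>k\<le>N. \<forall>p\<in>?S.
            cmod (ht w (real k / real N) (snd p) - ht w' (real k / real N) (snd p)) \<le> \<eta>)"
        and WU2: "\<forall>\<eta>>0. \<exists>d>0. \<forall>w\<in>{0..1}. \<forall>w'\<in>{0..1}. \<bar>w - w'\<bar> < d \<longrightarrow> (\<forall>k\<le>N. \<forall>p\<in>?S.
            cmod (D (ht w (real k / real N)) (snd p) - D (ht w' (real k / real N)) (snd p)) \<le> \<eta>)"
      proof -
        have key: "\<exists>d>0. \<forall>w\<in>{0..1}. \<forall>w'\<in>{0..1}. \<bar>w - w'\<bar> < d \<longrightarrow> (\<forall>k\<le>N. \<forall>s.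
            cmod (ht w (real k / real N) s - ht w' (real k / real N) s) \<le> \<eta> \<and>
            cmod (D (ht w (real k / real N)) s - D (ht w' (real k / real N)) s) \<le> \<eta>)" if \<eta>: "\<eta> > 0" for \<eta>
        proof -
          obtain d where d: "d > 0" "\<forall>p\<in>?Sq. \<forall>q\<in>?Sq. dist p q < d \<longrightarrow> (\<forall>s. cmod ((\<lambda>(z,t). ht z t) p s - (\<lambda>(z,t). ht z t) q s) \<le> \<eta> \<and> cmod (D ((\<lambda>(z,t). ht z t) p) s - D ((\<lambda>(z,t). ht z t) q) s) \<le> \<eta>)"
            using UC2 \<eta> by blast
          show ?thesis
          proof (intro exI[of _ d] conjI[OF d(1)] ballI impI allI)
            fix w w' :: real and k s assume w: "w \<in> {0..1}" and w': "w' \<in> {0..1}" and ww: "\<bar>w - w'\<bar> < d" and k: "k \<le> N"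
            have "dist (w, real k / real N) (w', real k / real N) < d" using ww by (simp add: dist_Pair_Pair dist_real_def)
            then show "cmod (ht w (real k / real N) s - ht w' (real k / real N) s) \<le> \<eta> \<and>
              cmod (D (ht w (real k / real N)) s - D (ht w' (real k / real N)) s) \<le> \<eta>"
              using d(2) w w' kN[OF k] by fastforce
          qed
        qed
        show "\<forall>\<eta>>0. \<exists>d>0. \<forall>w\<in>{0..1}. \<forall>w'\<in>{0..1}. \<bar>w - w'\<bar> < d \<longrightarrow> (\<forall>k\<le>N. \<forall>p\<in>?S.
            cmod (ht w (real k / real N) (snd p) - ht w' (real k / real N) (snd p)) \<le> \<eta>)"
          using key by meson
        show "\<forall>\<eta>>0. \<exists>d>0. \<forall>w\<in>{0..1}. \<forall>w'\<in>{0..1}. \<bar>w - w'\<bar> < d \<longrightarrow> (\<forall>k\<le>N. \<forall>p\<in>?S.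
            cmod (D (ht w (real k / real N)) (snd p) - D (ht w' (real k / real N)) (snd p)) \<le> \<eta>)"
          using key by meson
      qed
      have uM1: "\<forall>p\<in>?S. cmod (\<gamma> (fst p) (snd p)) \<le> Mg" using Mg by fastforce
      have uM2: "\<forall>p\<in>?S. cmod (Ft p) \<le> Mg" using Mg by fastforce
      have uM3: "\<forall>p\<in>?S. cmod (Fs p) \<le> Mg" using Mg by fastforce
      obtain d1 where d1: "d1 > 0" "\<forall>z'\<in>{0..1}. \<bar>z' - z\<bar> < d1 \<longrightarrow> (\<forall>p\<in>?S.
          cmod (((1 - a z') *\<^sub>R \<gamma> (fst p) (snd p) + a z' *\<^sub>R (\<Sum>k\<le>N. Bernstein N k (fst p) *\<^sub>R ht (b z') (real k / real N) (snd p)))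
           - ((1 - a z) *\<^sub>R \<gamma> (fst p) (snd p) + a z *\<^sub>R (\<Sum>k\<le>N. Bernstein N k (fst p) *\<^sub>R ht (b z) (real k / real N) (snd p)))) \<le> \<epsilon>)"
        using famcont_gen[OF ab(7) ab(8) ab(1) ab(2) uM1 cbS WM1 WU1 z \<epsilon>] by blast
      obtain d2 where d2: "d2 > 0" "\<forall>z'\<in>{0..1}. \<bar>z' - z\<bar> < d2 \<longrightarrow> (\<forall>p\<in>?S.
          cmod (((1 - a z') *\<^sub>R Ft p + a z' *\<^sub>R (\<Sum>k\<le>N. dB N k (fst p) *\<^sub>R ht (b z') (real k / real N) (snd p)))
           - ((1 - a z) *\<^sub>R Ft p + a z *\<^sub>R (\<Sum>k\<le>N. dB N k (fst p) *\<^sub>R ht (b z) (real k / real N) (snd p)))) \<le> \<epsilon>)"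
        using famcont_gen[OF ab(7) ab(8) ab(1) ab(2) uM2 cdS WM1 WU1 z \<epsilon>] by blast
      obtain d3 where d3: "d3 > 0" "\<forall>z'\<in>{0..1}. \<bar>z' - z\<bar> < d3 \<longrightarrow> (\<forall>p\<in>?S.
          cmod (((1 - a z') *\<^sub>R Fs p + a z' *\<^sub>R (\<Sum>k\<le>N. Bernstein N k (fst p) *\<^sub>R D (ht (b z') (real k / real N)) (snd p)))
           - ((1 - a z) *\<^sub>R Fs p + a z *\<^sub>R (\<Sum>k\<le>N. Bernstein N k (fst p) *\<^sub>R D (ht (b z) (real k / real N)) (snd p)))) \<le> \<epsilon>)"
        using famcont_gen[OF ab(7) ab(8) ab(1) ab(2) uM3 cbS WM2 WU2 z \<epsilon>] by blast
      have hcase: "(\<lambda>z (t, s). h z t s) y p = (1 - a y) *\<^sub>R \<gamma> (fst p) (snd p) + a y *\<^sub>R (\<Sum>k\<le>N. Bernstein N k (fst p) *\<^sub>R ht (b y) (real k / real N) (snd p))" for y p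
        by (simp add: h_def S_def case_prod_unfold)
      show "\<exists>d>0. \<forall>z'\<in>{0..1}. \<bar>z' - z\<bar> < d \<longrightarrow> (\<forall>p\<in>?S.
          cmod ((\<lambda>z (t, s). h z t s) z' p - (\<lambda>z (t, s). h z t s) z p) \<le> \<epsilon> \<and>
          cmod (Ht z' p - Ht z p) \<le> \<epsilon> \<and> cmod (Hs z' p - Hs z p) \<le> \<epsilon>)"
      proof (intro exI[of _ "min d1 (min d2 d3)"] conjI ballI impI)
        show "min d1 (min d2 d3) > 0" using d1 d2 d3 by simp
        fix z' p assume z': "z' \<in> {0..1}" and zz: "\<bar>z' - z\<bar> < min d1 (min d2 d3)" and p: "p \<in> ?S"
        show "cmod ((\<lambda>z (t, s). h z t s) z' p - (\<lambda>z (t, s). h z t s) z p) \<le> \<epsilon>"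
          unfolding hcase using d1(2) z' zz p by auto
        show "cmod (Ht z' p - Ht z p) \<le> \<epsilon>" unfolding Ht_def using d2(2) z' zz p by auto
        show "cmod (Hs z' p - Hs z p) \<le> \<epsilon>" unfolding Hs_def using d3(2) z' zz p by auto
      qed
    qed
  qed
qed



end
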